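(* Let $n\ge1$. For $i\ge0$ let $E_i^{+}\in\mathbb{Q}[\mathfrak{B}_n]$ be the sum of all signed permutations $\pi\in\mathfrak{B}_n$ with $\operatorname{pe}_B(\pi)=i$ and $\pi(1)>0$, and $E_i^{-}$ the sum of those with $\operatorname{pe}_B(\pi)=i$ and $\pi(1)<0$. The linear span $\mathfrak{p}_{B,n}$ of all $E_i^{+},E_i^{-}$ ($0\le i\le\lfloor n/2\rfloor$) is a commutative subalgebra of $\mathbb{Q}[\mathfrak{B}_n]$ of dimension $n+1$.
   Context: $\mathfrak{B}_n$ is the group of signed permutations of $\{\pm1,\dots,\pm n\}$ (bijections $\pi$ of $\{-n,\dots,n\}$ with $\pi(-i)=-\pi(i)$), with $\pi(0)=0$ and multiplication in $\mathbb{Q}[\mathfrak{B}_n]$ given by composition. A peak of $\pi\in\mathfrak{B}_n$ is a position $i\in\{1,\dots,n-1\}$ with $\pi(i-1)<\pi(i)>\pi(i+1)$; $\operatorname{pe}_B(\pi)$ is the number of peaks. *)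

theory Defs
  imports Complex_Main "HOL-Library.Function_Algebras"
begin

(* Signed permutations of {-n..n}, as functions int => int that are the identity
   outside [-n,n]. pi(0)=0 follows from oddness. *)
definition signed_perms :: "nat \<Rightarrow> (int \<Rightarrow> int) set" where
  "signed_perms n = {\<pi>. bij_betw \<pi> {- int n..int n} {- int n..int n}
                       \<and> (\<forall>i. \<pi> (- i) = - \<pi> i)
                       \<and> (\<forall>i. \<bar>i\<bar> > int n \<longrightarrow> \<pi> i = i)}"

(* peaks: positions i in {1..n-1} with pi(i-1) < pi(i) > pi(i+1), using pi(0)=0 *)
definition peB :: "nat \<Rightarrow> (int \<Rightarrow> int) \<Rightarrow> nat" where
  "peB n \<pi> = card {i \<in> {1..int n - 1}. \<pi> (i - 1) < \<pi> i \<and> \<pi> i > \<pi> (i + 1)}"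

(* Elements of Q[B_n]: coefficient functions (int => int) => rat supported on B_n. *)
definition gmult :: "nat \<Rightarrow> ((int \<Rightarrow> int) \<Rightarrow> rat) \<Rightarrow> ((int \<Rightarrow> int) \<Rightarrow> rat) \<Rightarrow> ((int \<Rightarrow> int) \<Rightarrow> rat)" where
  "gmult n a b = (\<lambda>\<sigma>. \<Sum>(\<pi>, \<tau>) \<in> {(\<pi>, \<tau>) \<in> signed_perms n \<times> signed_perms n. \<pi> \<circ> \<tau> = \<sigma>}. a \<pi> * b \<tau>)"

definition Eplus :: "nat \<Rightarrow> nat \<Rightarrow> ((int \<Rightarrow> int) \<Rightarrow> rat)" where
  "Eplus n i = (\<lambda>\<pi>. if \<pi> \<in> signed_perms n \<and> peB n \<pi> = i \<and> \<pi> 1 > 0 then 1 else 0)"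

definition Eminus :: "nat \<Rightarrow> nat \<Rightarrow> ((int \<Rightarrow> int) \<Rightarrow> rat)" where
  "Eminus n i = (\<lambda>\<pi>. if \<pi> \<in> signed_perms n \<and> peB n \<pi> = i \<and> \<pi> 1 < 0 then 1 else 0)"

definition qscale :: "rat \<Rightarrow> ('a \<Rightarrow> rat) \<Rightarrow> ('a \<Rightarrow> rat)" where
  "qscale c f = (\<lambda>x. c * f x)"

global_interpretation qv: vector_space "qscale :: rat \<Rightarrow> ('a \<Rightarrow> rat) \<Rightarrow> ('a \<Rightarrow> rat)"
  by unfold_locales (auto simp: qscale_def fun_eq_iff algebra_simps)

definition peak_algebra_B :: "nat \<Rightarrow> ((int \<Rightarrow> int) \<Rightarrow> rat) set" where
  "peak_algebra_B n = qv.span ({Eplus n i | i. i \<le> n div 2} \<union> {Eminus n i | i. i \<le> n div 2})"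

end

theory Submission
  imports Defs "HOL-Library.FuncSet"
begin

definition okst :: "bool \<Rightarrow> int \<Rightarrow> int \<Rightarrow> bool" where
  "okst s y z \<longleftrightarrow> y < z \<or> (y = z \<and> (odd y \<longleftrightarrow> s))"

definition stepv :: "int \<Rightarrow> bool \<Rightarrow> (int \<Rightarrow> int) \<Rightarrow> (int \<Rightarrow> int)" where
  "stepv N s l = (\<lambda>z. if z \<in> {1..N} then (\<Sum>y\<in>{1..N}. if okst s y z then l y else 0) else 0)"

definition esg :: "int \<Rightarrow> int" where "esg y = (if odd y then 1 else -1)"

lemma alt_sum_aux: "odd a \<Longrightarrow> (\<Sum>y\<in>{a..a + 2 * int k - 1}. esg y) = 0"
proof (induction k)
  case 0 then show ?case by simp
next
  case (Suc k)
  have "{a..a + 2 * int (Suc k) - 1} = insert (a + 2*int k + 1) (insert (a + 2*int k) {a..a + 2 * int k - 1})"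
    by auto
  then show ?case using Suc by (simp add: esg_def)
qed

lemma alt_sum: assumes "odd a" "even b" shows "(\<Sum>y\<in>{a..b}. esg y) = 0"
proof (cases "b < a")
  case True then show ?thesis by simp
next
  case False
  define k where "k = nat ((b - a + 1) div 2)"
  obtain c d where cd: "b = 2*c" "a = 2*d+1" using assms by (auto elim!: oddE evenE)
  have "b - a + 1 = 2 * (c - d)" using cd by simp
  then have "(b - a + 1) div 2 = c - d" by simp
  then have "b = a + 2 * int k - 1" using False cd unfolding k_def by simp
  then show ?thesis using alt_sum_aux assms(1) by simp
qed

lemma alt_sum_aux2: "even a \<Longrightarrow> (\<Sum>y\<in>{a..a + 2 * int k - 1}. esg y) = 0"
proof (induction k)
  case 0 then show ?case by simp
next
  case (Suc k)
  have "{a..a + 2 * int (Suc k) - 1} = insert (a + 2*int k + 1) (insert (a + 2*int k) {a..a + 2 * int k - 1})"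
    by auto
  then show ?case using Suc by (simp add: esg_def)
qed

lemma alt_sum2: assumes "even a" "odd b" shows "(\<Sum>y\<in>{a..b}. esg y) = 0"
proof (cases "b < a")
  case True then show ?thesis by simp
next
  case False
  define k where "k = nat ((b - a + 1) div 2)"
  obtain c d where cd: "b = 2*c+1" "a = 2*d" using assms by (auto elim!: oddE evenE)
  have "b - a + 1 = 2 * (c - d + 1)" using cd by simp
  then have "(b - a + 1) div 2 = c - d + 1" by simp
  then have "b = a + 2 * int k - 1" using False cd unfolding k_def by simp
  then show ?thesis using alt_sum_aux2 assms(1) by simp
qed

lemma inner_TF:
  assumes "x \<in> {1..N}" "z \<in> {1..N}"
  shows "(\<Sum>y\<in>{1..N}. if okst True x y \<and> okst False y z then esg y else 0) = 0"
proof -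
  define lo where "lo = (if odd x then x else x+1)"
  define hi where "hi = (if even z then z else z - 1)"
  have "{y\<in>{1..N}. okst True x y \<and> okst False y z} = {lo..hi}"
    using assms unfolding lo_def hi_def okst_def by auto
  moreover have "odd lo" "even hi" unfolding lo_def hi_def by auto
  ultimately show ?thesis using alt_sum by (simp add: sum.If_cases Int_def)
qed

lemma inner_FT:
  assumes "x \<in> {1..N}" "z \<in> {1..N}"
  shows "(\<Sum>y\<in>{1..N}. if okst False x y \<and> okst True y z then esg y else 0) = 0"
proof -
  define lo where "lo = (if even x then x else x+1)"
  define hi where "hi = (if odd z then z else z - 1)"
  have "{y\<in>{1..N}. okst False x y \<and> okst True y z} = {lo..hi}"
    using assms unfolding lo_def hi_def okst_def by auto
  moreover have "even lo" "odd hi" unfolding lo_def hi_def by auto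
  ultimately show ?thesis using alt_sum2 by (simp add: sum.If_cases Int_def)
qed

lemma inner_F_end:
  assumes "x \<in> {1..N}" "odd N"
  shows "(\<Sum>y\<in>{1..N}. if okst False x y then esg y else 0) = 0"
proof -
  define lo where "lo = (if even x then x else x+1)"
  have "{y\<in>{1..N}. okst False x y} = {lo..N}"
    using assms unfolding lo_def okst_def by auto
  moreover have "even lo" unfolding lo_def by auto
  ultimately show ?thesis using alt_sum2 assms by (simp add: sum.If_cases Int_def)
qed

lemma stepv_diff:
  assumes "y \<in> {1..N}"
  shows "stepv N True l y - stepv N False l y = esg y * l y"
proof -
  have "stepv N True l y - stepv N False l y =
     (\<Sum>x\<in>{1..N}. (if okst True x y then l x else 0) - (if okst False x y then l x else 0))"
    using assms by (simp add: stepv_def sum_subtractf)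
  also have "\<dots> = (\<Sum>x\<in>{1..N}. if x = y then esg y * l y else 0)"
    by (rule sum.cong) (auto simp: okst_def esg_def)
  also have "\<dots> = esg y * l y" using assms by simp
  finally show ?thesis .
qed

lemma stepv_minus:
  "stepv N s (\<lambda>y. l1 y - l2 y) = (\<lambda>z. stepv N s l1 z - stepv N s l2 z)"
  by (auto simp: stepv_def fun_eq_iff sum_subtractf[symmetric] intro!: sum.cong)

lemma stepv_esg_zero:
  assumes inner: "\<And>x z. x \<in> {1..N} \<Longrightarrow> z \<in> {1..N} \<Longrightarrow>
      (\<Sum>y\<in>{1..N}. if okst s1 x y \<and> okst s2 y z then esg y else 0) = 0"
  shows "stepv N s2 (\<lambda>y. if y \<in> {1..N} then esg y * stepv N s1 l y else 0) = (\<lambda>z. 0)"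
proof
  fix z
  show "stepv N s2 (\<lambda>y. if y \<in> {1..N} then esg y * stepv N s1 l y else 0) z = 0"
  proof (cases "z \<in> {1..N}")
    case False then show ?thesis by (auto simp: stepv_def)
  next
    case True
    have "stepv N s2 (\<lambda>y. if y \<in> {1..N} then esg y * stepv N s1 l y else 0) z
        = (\<Sum>y\<in>{1..N}. if okst s2 y z then esg y * (\<Sum>x\<in>{1..N}. if okst s1 x y then l x else 0) else 0)"
      using True by (auto simp: stepv_def intro!: sum.cong)
    also have "\<dots> = (\<Sum>y\<in>{1..N}. \<Sum>x\<in>{1..N}. if okst s1 x y \<and> okst s2 y z then l x * esg y else 0)"
      by (rule sum.cong) (auto simp: sum_distrib_left intro!: sum.cong)
    also have "\<dots> = (\<Sum>x\<in>{1..N}. \<Sum>y\<in>{1..N}. if okst s1 x y \<and> okst s2 y z then l x * esg y else 0)"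
      by (rule sum.swap)
    also have "\<dots> = (\<Sum>x\<in>{1..N}. l x * (\<Sum>y\<in>{1..N}. if okst s1 x y \<and> okst s2 y z then esg y else 0))"
      by (auto simp: sum_distrib_left intro!: sum.cong)
    also have "\<dots> = 0" using inner True by simp
    finally show ?thesis .
  qed
qed

lemma stepv_restrict:
  "stepv N s l = stepv N s (\<lambda>y. if y \<in> {1..N} then l y else 0)"
  by (auto simp: stepv_def fun_eq_iff intro!: sum.cong)

lemma move_UUD:
  "stepv N False (stepv N True (stepv N True l)) = stepv N False (stepv N False (stepv N True l))"
proof -
  let ?l = "stepv N True l"
  have "(\<lambda>z. stepv N False (stepv N True ?l) z - stepv N False (stepv N False ?l) z)
      = stepv N False (\<lambda>y. stepv N True ?l y - stepv N False ?l y)"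
    by (simp add: stepv_minus)
  also have "\<dots> = stepv N False (\<lambda>y. if y \<in> {1..N} then esg y * ?l y else 0)"
    by (subst stepv_restrict) (auto simp: stepv_diff intro!: arg_cong[where f="stepv N False"])
  also have "\<dots> = (\<lambda>z. 0)" by (rule stepv_esg_zero) (rule inner_TF)
  finally show ?thesis by (auto simp: fun_eq_iff dest: fun_cong)
qed

lemma move_DDU:
  "stepv N True (stepv N False (stepv N False l)) = stepv N True (stepv N True (stepv N False l))"
proof -
  let ?l = "stepv N False l"
  have "(\<lambda>z. stepv N True (stepv N True ?l) z - stepv N True (stepv N False ?l) z)
      = stepv N True (\<lambda>y. stepv N True ?l y - stepv N False ?l y)"
    by (simp add: stepv_minus)
  also have "\<dots> = stepv N True (\<lambda>y. if y \<in> {1..N} then esg y * ?l y else 0)"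
    by (subst stepv_restrict) (auto simp: stepv_diff intro!: arg_cong[where f="stepv N True"])
  also have "\<dots> = (\<lambda>z. 0)" by (rule stepv_esg_zero) (rule inner_FT)
  finally show ?thesis by (auto simp: fun_eq_iff dest: fun_cong)
qed

lemma move_end:
  assumes "odd N"
  shows "(\<Sum>z\<in>{1..N}. stepv N False (stepv N False l) z) = (\<Sum>z\<in>{1..N}. stepv N True (stepv N False l) z)"
proof -
  let ?l = "stepv N False l"
  have "(\<Sum>z\<in>{1..N}. stepv N True ?l z) - (\<Sum>z\<in>{1..N}. stepv N False ?l z)
      = (\<Sum>z\<in>{1..N}. esg z * ?l z)"
    by (simp add: sum_subtractf[symmetric] stepv_diff)
  also have "\<dots> = (\<Sum>z\<in>{1..N}. \<Sum>x\<in>{1..N}. if okst False x z then l x * esg z else 0)"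
    by (auto simp: stepv_def sum_distrib_left mult.commute intro!: sum.cong)
  also have "\<dots> = (\<Sum>x\<in>{1..N}. \<Sum>z\<in>{1..N}. if okst False x z then l x * esg z else 0)"
    by (rule sum.swap)
  also have "\<dots> = (\<Sum>x\<in>{1..N}. l x * (\<Sum>z\<in>{1..N}. if okst False x z then esg z else 0))"
    by (auto simp: sum_distrib_left intro!: sum.cong)
  also have "\<dots> = 0" using inner_F_end assms by simp
  finally show ?thesis by simp
qed

definition vecl :: "int \<Rightarrow> (int \<Rightarrow> int) \<Rightarrow> bool list \<Rightarrow> (int \<Rightarrow> int)" where
  "vecl N l w = foldl (\<lambda>l s. stepv N s l) l w"

definition Fs :: "int \<Rightarrow> (int \<Rightarrow> int) \<Rightarrow> bool list \<Rightarrow> int" where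
  "Fs N l w = (\<Sum>z\<in>{1..N}. vecl N l w z)"

lemma vecl_Nil[simp]: "vecl N l [] = l" by (simp add: vecl_def)
lemma vecl_append: "vecl N l (w1 @ w2) = vecl N (vecl N l w1) w2" by (simp add: vecl_def)
lemma vecl_snoc: "vecl N l (w @ [s]) = stepv N s (vecl N l w)" by (simp add: vecl_def)
lemma vecl_Cons: "vecl N l (s # w) = vecl N (stepv N s l) w" by (simp add: vecl_def)

definition weq :: "int \<Rightarrow> bool list \<Rightarrow> bool list \<Rightarrow> bool" where
  "weq N w1 w2 \<longleftrightarrow> (\<forall>l. vecl N l w1 = vecl N l w2)"

lemma weq_refl[simp]: "weq N w w" by (simp add: weq_def)
lemma weq_sym: "weq N w1 w2 \<Longrightarrow> weq N w2 w1" by (simp add: weq_def)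
lemma weq_trans: "weq N w1 w2 \<Longrightarrow> weq N w2 w3 \<Longrightarrow> weq N w1 w3" by (simp add: weq_def)
lemma weq_app: "weq N w1 w2 \<Longrightarrow> weq N (a @ w1 @ b) (a @ w2 @ b)"
  by (simp add: weq_def vecl_append)
lemma weq_appL: "weq N w1 w2 \<Longrightarrow> weq N (a @ w1) (a @ w2)"
  using weq_app[of N w1 w2 a "[]"] by simp
lemma weq_appR: "weq N w1 w2 \<Longrightarrow> weq N (w1 @ b) (w2 @ b)"
  using weq_app[of N w1 w2 "[]" b] by simp
lemma weq_Fs: "weq N w1 w2 \<Longrightarrow> Fs N l w1 = Fs N l w2" by (simp add: weq_def Fs_def)

lemma weq_UUD: "weq N [True,True,False] [True,False,False]"
  using move_UUD by (simp add: weq_def vecl_def)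
lemma weq_DDU: "weq N [False,False,True] [False,True,True]"
  using move_DDU by (simp add: weq_def vecl_def)
lemma Fs_end: "odd N \<Longrightarrow> Fs N l (w @ [False,False]) = Fs N l (w @ [False,True])"
  using move_end[of N "vecl N l w"] by (simp add: Fs_def vecl_def)

definition ud :: "nat \<Rightarrow> bool list" where "ud p = concat (replicate p [True, False])"

lemma ud_0[simp]: "ud 0 = []" by (simp add: ud_def)
lemma ud_Suc: "ud (Suc p) = [True, False] @ ud p" by (simp add: ud_def)
lemma ud_Suc': "ud (Suc p) = ud p @ [True, False]"
  by (induction p) (auto simp: ud_def)

declare weq_trans[trans]

lemma La: "weq N (ud j @ [True,True,False]) ([True,True,False] @ ud j)"
proof (induction j)
  case 0 then show ?case by simp
next
  case (Suc j)
  have "weq N (ud (Suc j) @ [True,True,False]) (True#False#True#True#False#ud j)"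
    using weq_appL[OF Suc, of "[True,False]"] by (simp add: ud_Suc)
  also have "weq N (True#False#True#True#False#ud j) (True#False#False#True#False#ud j)"
    using weq_app[OF weq_sym[OF weq_DDU], of N "[True]" "False # ud j"] by simp
  also have "weq N (True#False#False#True#False#ud j) (True#True#False#True#False#ud j)"
    using weq_app[OF weq_sym[OF weq_UUD], of N "[]" "True # False # ud j"] by simp
  finally show ?case by (simp add: ud_Suc)
qed

lemma Lb: "p \<ge> 1 \<Longrightarrow> weq N (ud p @ [False]) ([True] @ ud p)"
proof -
  assume "p \<ge> 1"
  then obtain q where q: "p = Suc q" by (cases p) auto
  have "weq N (ud p @ [False]) (ud q @ [True,True,False])"
    using weq_appL[OF weq_sym[OF weq_UUD], of N "ud q"] q by (simp add: ud_Suc')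
  also have "weq N (ud q @ [True,True,False]) ([True,True,False] @ ud q)" by (rule La)
  finally show ?thesis using q by (simp add: ud_Suc)
qed

lemma Lc: "weq N (ud p @ [True,True]) ([True] @ ud p @ [True])"
proof (cases p)
  case 0 then show ?thesis by simp
next
  case (Suc q)
  have "weq N (ud p @ [True,True]) (ud q @ [True] @ [False,False,True] @ [])"
    using weq_app[OF weq_sym[OF weq_DDU], of N "ud q @ [True]" "[]"] Suc by (simp add: ud_Suc')
  also have "weq N (ud q @ [True] @ [False,False,True] @ []) (ud q @ [True,True,False] @ [True])"
    using weq_app[OF weq_sym[OF weq_UUD], of N "ud q" "[True]"] by simp
  also have "weq N (ud q @ [True,True,False] @ [True]) ([True,True,False] @ ud q @ [True])"
    using weq_appR[OF La, of N q "[True]"] by simp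
  finally show ?thesis using Suc by (simp add: ud_Suc)
qed

lemma Ld: "p \<ge> 1 \<Longrightarrow> weq N ([False,True] @ ud p) ([False,False] @ ud p)"
proof -
  assume "p \<ge> 1"
  then obtain q where q: "p = Suc q" by (cases p) auto
  show ?thesis
    using weq_app[OF weq_sym[OF weq_DDU], of N "[]" "False # ud q"] q by (simp add: ud_Suc)
qed

fun pkl :: "bool list \<Rightarrow> nat" where
  "pkl (x # y # w) = (if x \<and> \<not> y then 1 else 0) + pkl (y # w)"
| "pkl _ = 0"

lemma pkl_snoc: "pkl (w @ [x]) = pkl w + (if w \<noteq> [] \<and> last w \<and> \<not> x then 1 else 0)"
  by (induction w rule: pkl.induct) auto

lemma len_bound:
  "w \<noteq> [] \<Longrightarrow> 2 * pkl w + (if hd w then 0 else 1) + (if last w then 1 else 0) \<le> length w"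
proof (induction w rule: rev_induct)
  case Nil then show ?case by simp
next
  case (snoc x v)
  show ?case
  proof (cases "v = []")
    case True then show ?thesis by auto
  next
    case False
    then show ?thesis using snoc.IH by (auto simp: pkl_snoc split: if_splits)
  qed
qed

lemma pkl_pos: "w \<noteq> [] \<Longrightarrow> hd w \<Longrightarrow> \<not> last w \<Longrightarrow> pkl w \<ge> 1"
proof (induction w rule: rev_induct)
  case Nil then show ?case by simp
next
  case (snoc x v)
  show ?case
  proof (cases "v = []")
    case True then show ?thesis using snoc.prems by auto
  next
    case False
    then show ?thesis using snoc by (auto simp: pkl_snoc)
  qed
qed

definition canw :: "bool \<Rightarrow> bool \<Rightarrow> nat \<Rightarrow> nat \<Rightarrow> bool list" where
  "canw f l p n = (if l then replicate (n - 2*p - 1) f @ ud p @ [True] else replicate (n - 2*p) f @ ud p)"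

lemma trans_can:
  assumes len: "2 * p + (if f then 0 else 1) + (if lv then 1 else 0) \<le> n"
    and pp: "f \<and> \<not> lv \<longrightarrow> p \<ge> 1"
  shows "weq N (canw f lv p n @ [x]) (canw f x (p + (if lv \<and> \<not> x then 1 else 0)) (Suc n))"
proof (cases f)
  case True
  note f = True
  show ?thesis
  proof (cases lv)
    case True
    define k where "k = n - 2*p - 1"
    have k: "n - 2*p - 1 = k" "n - 2*p = Suc k" using len f True unfolding k_def by auto
    show ?thesis
    proof (cases x)
      case True
      have "weq N (replicate k True @ (ud p @ [True,True])) (replicate k True @ ([True] @ ud p @ [True]))"
        by (rule weq_appL) (rule Lc)
      then show ?thesis using f \<open>lv\<close> True k len by (simp add: canw_def replicate_append_same replicate_app_Cons_same)
    next
      case False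
      have "Suc n - 2 * (p+1) = k" using k len f \<open>lv\<close> by auto
      then show ?thesis using f \<open>lv\<close> False k by (simp add: canw_def ud_Suc')
    qed
  next
    case False
    note lv = False
    have p1: "p \<ge> 1" using pp f lv by auto
    show ?thesis
    proof (cases x)
      case True
      have "Suc n - 2*p - 1 = n - 2*p" by simp
      then show ?thesis using f lv True by (simp add: canw_def)
    next
      case False
      have "weq N (replicate (n - 2*p) True @ (ud p @ [False])) (replicate (n - 2*p) True @ ([True] @ ud p))"
        by (rule weq_appL) (rule Lb[OF p1])
      moreover have "Suc n - 2*p = Suc (n - 2*p)" using len f lv by auto
      ultimately show ?thesis using f lv False by (simp add: canw_def replicate_append_same replicate_app_Cons_same)
    qed
  qed
next
  case False
  note f = False
  show ?thesis
  proof (cases lv)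
    case True
    note lv = True
    define k where "k = n - 2*p - 2"
    have k: "n - 2*p - 1 = Suc k" "n - 2*p = Suc (Suc k)" using len f lv unfolding k_def by auto
    show ?thesis
    proof (cases x)
      case True
      have A: "weq N (replicate k False @ [False] @ (ud p @ [True,True])) (replicate k False @ [False] @ ([True] @ ud p @ [True]))"
        using weq_appL[OF Lc, where a="replicate k False @ [False]"] by simp
      have B: "weq N (replicate k False @ ([False,True] @ ud p @ [True])) (replicate k False @ ([False,False] @ ud p @ [True]))"
      proof (cases p)
        case 0 then show ?thesis using weq_appL[OF weq_sym[OF weq_DDU], of N "replicate k False"] by simp
      next
        case (Suc q)
        then show ?thesis using weq_appL[OF weq_appR[OF Ld[of p N], of "[True]"], of "replicate k False"] by simp
      qed
      have k3: "n - 2 * p - 1 = Suc k" using k by simp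
      have E1: "canw f lv p n @ [x] = replicate k False @ [False] @ (ud p @ [True,True])"
        using f lv True unfolding canw_def k3 by (simp add: replicate_app_Cons_same)
      have E2: "canw f x p (Suc n) = replicate k False @ ([False,False] @ ud p @ [True])"
      proof -
        have "Suc n - 2*p - 1 = Suc (Suc k)" using k by auto
        then show ?thesis using f lv True unfolding canw_def by (simp add: replicate_app_Cons_same)
      qed
      have "weq N (canw f lv p n @ [x]) (canw f x p (Suc n))"
        unfolding E1 E2 using weq_trans[OF A] B by simp
      then show ?thesis using lv True by simp

    next
      case False
      have "Suc n - 2 * (p+1) = Suc k" using k by auto
      then show ?thesis using f lv False k by (simp add: canw_def ud_Suc')
    qed
  next
    case False
    note lv = False
    define k where "k = n - 2*p - 1"
    have k: "n - 2*p = Suc k" using len f lv unfolding k_def by auto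
    show ?thesis
    proof (cases x)
      case True
      have "Suc n - 2*p - 1 = n - 2*p" by simp
      then show ?thesis using f lv True by (simp add: canw_def)
    next
      case False
      have B: "weq N (replicate k False @ ([False] @ (ud p @ [False]))) (replicate k False @ ([False,False] @ ud p))"
      proof (cases p)
        case 0 then show ?thesis by (simp add: replicate_app_Cons_same)
      next
        case (Suc q)
        then have p1: "p \<ge> 1" by simp
        have "weq N (replicate k False @ ([False] @ (ud p @ [False]))) (replicate k False @ ([False] @ ([True] @ ud p)))"
          by (rule weq_appL, rule weq_appL, rule Lb[OF p1])
        also have "weq N (replicate k False @ ([False] @ ([True] @ ud p))) (replicate k False @ ([False,False] @ ud p))"
          using weq_appL[OF Ld[OF p1], of N "replicate k False"] by simp
        finally show ?thesis .
      qed
      moreover have "Suc n - 2*p = Suc (Suc k)" using k by auto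
      ultimately show ?thesis using f lv False k by (simp add: canw_def replicate_app_Cons_same)
    qed
  qed
qed

lemma can_inv: "w \<noteq> [] \<Longrightarrow> weq N w (canw (hd w) (last w) (pkl w) (length w))"
proof (induction w rule: rev_induct)
  case Nil then show ?case by simp
next
  case (snoc x v)
  show ?case
  proof (cases "v = []")
    case True then show ?thesis by (cases x) (auto simp: canw_def)
  next
    case False
    have 1: "weq N (v @ [x]) (canw (hd v) (last v) (pkl v) (length v) @ [x])"
      using weq_appR[OF snoc.IH[OF False]] .
    have 2: "weq N (canw (hd v) (last v) (pkl v) (length v) @ [x])
       (canw (hd v) x (pkl v + (if last v \<and> \<not> x then 1 else 0)) (Suc (length v)))"
      by (rule trans_can) (use len_bound[OF False] pkl_pos[OF False] in auto)
    show ?thesis using weq_trans[OF 1 2] False by (simp add: pkl_snoc)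
  qed
qed

lemma L5: "p \<ge> 1 \<Longrightarrow> weq N ([False] @ ud p @ [False]) ([False,False] @ ud p)"
proof -
  assume p1: "p \<ge> 1"
  have "weq N ([False] @ ud p @ [False]) ([False] @ ([True] @ ud p))"
    using weq_appL[OF Lb[OF p1], where a="[False]"] by simp
  also have "weq N ([False] @ ([True] @ ud p)) ([False,False] @ ud p)"
    using Ld[OF p1] by simp
  finally show ?thesis .
qed

lemma can_end:
  assumes N: "odd N" and len: "2 * p + (if f then 0 else 1) + 1 \<le> n" and pp: "f \<longrightarrow> p \<ge> 1"
  shows "Fs N l (canw f True p n) = Fs N l (canw f False p n)"
proof (cases f)
  case True
  then obtain q where q: "p = Suc q" using pp by (cases p) auto
  define k where "k = n - 2*p - 1"
  have nk: "n - 2*p = Suc k" using len True unfolding k_def by auto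
  have "Fs N l (canw f True p n) = Fs N l ((replicate k True @ ud q @ [True]) @ [False,True])"
    using True q unfolding canw_def k_def by (simp add: ud_Suc')
  also have "\<dots> = Fs N l ((replicate k True @ ud q @ [True]) @ [False,False])"
    by (rule Fs_end[OF N, symmetric])
  also have "(replicate k True @ ud q @ [True]) @ [False,False] = replicate k True @ (ud p @ [False])"
    using q by (simp add: ud_Suc')
  also have "Fs N l \<dots> = Fs N l (replicate k True @ ([True] @ ud p))"
    by (rule weq_Fs, rule weq_appL, rule Lb) (use q in simp)
  also have "replicate k True @ ([True] @ ud p) = canw f False p n"
    using True nk unfolding canw_def by (simp add: replicate_app_Cons_same)
  finally show ?thesis .
next
  case False
  note f = False
  show ?thesis
  proof (cases p)
    case 0
    define k where "k = n - 2"
    have nk: "n - 1 = Suc k" "n = Suc (Suc k)" using len f 0 unfolding k_def by auto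
    have "Fs N l (canw f True p n) = Fs N l (replicate k False @ [False,True])"
      using f 0 nk unfolding canw_def by (simp add: replicate_app_Cons_same)
    also have "\<dots> = Fs N l (replicate k False @ [False,False])"
      by (rule Fs_end[OF N, symmetric])
    also have "replicate k False @ [False,False] = canw f False p n"
      using f 0 nk unfolding canw_def by (simp add: replicate_app_Cons_same)
    finally show ?thesis .
  next
    case (Suc q)
    define k where "k = n - 2*p - 2"
    have nk: "n - 2*p - 1 = Suc k" "n - 2*p = Suc (Suc k)" using len f unfolding k_def by auto
    have "Fs N l (canw f True p n) = Fs N l ((replicate (Suc k) False @ ud q @ [True]) @ [False,True])"
      using f Suc nk unfolding canw_def by (simp add: ud_Suc')
    also have "\<dots> = Fs N l ((replicate (Suc k) False @ ud q @ [True]) @ [False,False])"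
      by (rule Fs_end[OF N, symmetric])
    also have "(replicate (Suc k) False @ ud q @ [True]) @ [False,False] = replicate k False @ ([False] @ ud p @ [False])"
      using Suc by (simp add: ud_Suc' replicate_app_Cons_same)
    also have "Fs N l \<dots> = Fs N l (replicate k False @ ([False,False] @ ud p))"
      by (rule weq_Fs, rule weq_appL, rule L5) (use Suc in simp)
    also have "replicate k False @ ([False,False] @ ud p) = canw f False p n"
      using f nk unfolding canw_def by (simp add: replicate_app_Cons_same)
    finally show ?thesis .
  qed
qed

lemma Fs_class:
  assumes N: "odd N" and ne: "w \<noteq> []" and "length w' = length w" "hd w' = hd w" "pkl w' = pkl w"
  shows "Fs N l w' = Fs N l w"
proof -
  have ne': "w' \<noteq> []" using assms by auto
  have 1: "Fs N l w = Fs N l (canw (hd w) (last w) (pkl w) (length w))"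
    using weq_Fs[OF can_inv[OF ne]] .
  have 2: "Fs N l w' = Fs N l (canw (hd w) (last w') (pkl w) (length w))"
    using weq_Fs[OF can_inv[OF ne']] assms by simp
  show ?thesis
  proof (cases "last w' = last w")
    case True then show ?thesis using 1 2 by simp
  next
    case False
    define a where "a = (if last w then w else w')"
    define b where "b = (if last w then w' else w)"
    have ab: "a \<noteq> []" "b \<noteq> []" "last a" "\<not> last b" "hd a = hd w" "hd b = hd w"
      "pkl a = pkl w" "pkl b = pkl w" "length a = length w" "length b = length w"
      using False assms ne ne' unfolding a_def b_def by auto
    have e: "Fs N l (canw (hd w) True (pkl w) (length w)) = Fs N l (canw (hd w) False (pkl w) (length w))"
      apply (rule can_end[OF N])
      using len_bound[OF ab(1)] pkl_pos[OF ab(2)] ab by auto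
    show ?thesis using 1 2 e False by (cases "last w") auto
  qed
qed

lemma stepv_nonneg: "(\<And>y. l y \<ge> 0) \<Longrightarrow> stepv N s l z \<ge> 0"
  by (auto simp: stepv_def intro!: sum_nonneg)

lemma vecl_nonneg: "(\<And>y. l y \<ge> 0) \<Longrightarrow> vecl N l w z \<ge> 0"
proof (induction w arbitrary: z rule: rev_induct)
  case Nil then show ?case by simp
next
  case (snoc x xs) then show ?case by (simp add: vecl_snoc stepv_nonneg)
qed

lemma stepv_pos:
  assumes "\<And>y. l y \<ge> 0" "z \<in> {1..N}" "y \<in> {1..N}" "okst s y z" "l y > 0"
  shows "stepv N s l z > 0"
proof -
  have "0 < (if okst s y z then l y else 0)" using assms by simp
  also have "\<dots> \<le> (\<Sum>y\<in>{1..N}. if okst s y z then l y else 0)"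
    by (rule member_le_sum) (use assms in auto)
  finally show ?thesis using assms by (simp add: stepv_def)
qed

lemma stepv_nz:
  assumes "stepv N s l z \<noteq> 0"
  shows "z \<in> {1..N} \<and> (\<exists>y\<in>{1..N}. okst s y z \<and> l y \<noteq> 0)"
proof -
  have z: "z \<in> {1..N}" using assms unfolding stepv_def by (cases "z \<in> {1..N}") auto
  have "(\<Sum>y\<in>{1..N}. if okst s y z then l y else 0) \<noteq> 0" using assms z by (simp add: stepv_def)
  then obtain y where "y \<in> {1..N}" "(if okst s y z then l y else 0) \<noteq> 0"
    by (rule sum.not_neutral_contains_not_neutral)
  then show ?thesis using z by (auto split: if_splits)
qed

fun trn :: "bool list \<Rightarrow> nat" where
  "trn (x # y # w) = (if x = y then 0 else 1) + trn (y # w)"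
| "trn _ = 0"

lemma trn_snoc: "trn (w @ [x]) = trn w + (if w \<noteq> [] \<and> last w \<noteq> x then 1 else 0)"
  by (induction w rule: trn.induct) auto

lemma trn_Cons: "w \<noteq> [] \<Longrightarrow> trn (x # w) = (if x = hd w then 0 else 1) + trn w"
  by (cases w) auto

lemma pkl_Cons: "w \<noteq> [] \<Longrightarrow> pkl (x # w) = (if x \<and> \<not> hd w then 1 else 0) + pkl w"
  by (cases w) auto

lemma trn_pkl: "w \<noteq> [] \<Longrightarrow> 2 * pkl w \<le> trn w + (if hd w then 1 else 0)"
proof (induction w rule: pkl.induct)
  case (1 x y w) then show ?case by auto
next
  case ("2_1") then show ?case by simp
next
  case ("2_2" v) then show ?case by simp
qed

lemma support:
  assumes sup: "\<And>y. l y \<noteq> 0 \<Longrightarrow> y = x0"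
  shows "vecl N l w y \<noteq> 0 \<Longrightarrow>
    y - x0 \<ge> int (trn (odd x0 # w)) + (if odd y \<longleftrightarrow> last (odd x0 # w) then 0 else 1)"
proof (induction w arbitrary: y rule: rev_induct)
  case Nil then show ?case using sup by auto
next
  case (snoc s w)
  from stepv_nz[of N s "vecl N l w" y] snoc.prems
  obtain y' where y': "y' \<in> {1..N}" "okst s y' y" "vecl N l w y' \<noteq> 0"
    by (auto simp: vecl_snoc)
  have IH: "y' - x0 \<ge> int (trn (odd x0 # w)) + (if odd y' \<longleftrightarrow> last (odd x0 # w) then 0 else 1)"
    using snoc.IH[OF y'(3)] .
  have t: "trn (odd x0 # w @ [s]) = trn (odd x0 # w) + (if last (odd x0 # w) \<noteq> s then 1 else 0)"
    using trn_snoc[of "odd x0 # w" s] by simp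
  have l: "last (odd x0 # w @ [s]) = s" by simp
  show ?case
  proof (cases "y' = y")
    case True
    then have "odd y \<longleftrightarrow> s" using y'(2) by (simp add: okst_def)
    then show ?thesis using IH True t l by (auto split: if_splits)
  next
    case False
    then have "y' < y" using y'(2) by (simp add: okst_def)
    then show ?thesis using IH t l
      by (cases "y = y' + 1") (auto split: if_splits)
  qed
qed

definition e0 :: "int \<Rightarrow> int \<Rightarrow> int" where "e0 N = (\<lambda>y. if y = (N + 1) div 2 then 1 else 0)"

lemma vanish:
  assumes "w \<noteq> []" "t \<ge> 0"
    and big: "int (2 * pkl w + (if hd w then 0 else 1)) > t"
  shows "Fs (2*t+1) (e0 (2*t+1)) w = 0"
proof -
  have "vecl (2*t+1) (e0 (2*t+1)) w z = 0" for z
  proof (rule ccontr)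
    assume nz: "vecl (2*t+1) (e0 (2*t+1)) w z \<noteq> 0"
    have x0: "(2*t+1+1) div 2 = t+1" by simp
    have sp: "\<And>y. e0 (2*t+1) y \<noteq> 0 \<Longrightarrow> y = t+1" unfolding e0_def using x0 by (auto split: if_splits)
    from support[OF sp nz]
    have 1: "z - (t+1) \<ge> int (trn (odd (t+1) # w))" by (auto split: if_splits)
    have zN: "z \<le> 2*t+1"
    proof -
      obtain v where "w = v @ [last w]" using assms(1) by (metis append_butlast_last_id)
      then have "stepv (2*t+1) (last w) (vecl (2*t+1) (e0 (2*t+1)) v) z \<noteq> 0"
        using nz by (metis vecl_snoc)
      then show ?thesis using stepv_nz by auto
    qed
    have 2: "trn (odd (t+1) # w) = (if odd (t+1) = hd w then 0 else 1) + trn w"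
      using trn_Cons[OF assms(1)] .
    have 3: "2 * pkl w \<le> trn w + (if hd w then 1 else 0)" using trn_pkl[OF assms(1)] .
    show False
    proof (cases "hd w")
      case True
      then have "int (trn w) + 1 \<ge> 2 * int (pkl w)" using 3 by simp
      moreover have "z - (t+1) \<ge> int (trn w) + (if odd (t+1) then 0 else 1)" using 1 2 True by auto
      ultimately have "t \<ge> 2 * int (pkl w) - 1 + (if odd (t+1) then 0 else 1)" using zN by linarith
      moreover have "t < 2 * int (pkl w)" using big True by simp
      ultimately have "t = 2 * int (pkl w) - 1" "odd (t+1)" by (auto split: if_splits)
      then show False by simp
    next
      case False
      then have "int (trn w) \<ge> 2 * int (pkl w)" using 3 by simp
      moreover have "z - (t+1) \<ge> int (trn w) + (if odd (t+1) then 1 else 0)" using 1 2 False by auto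
      ultimately have "t \<ge> 2 * int (pkl w) + (if odd (t+1) then 1 else 0)" using zN by linarith
      moreover have "t < 2 * int (pkl w) + 1" using big False by simp
      ultimately have "t = 2 * int (pkl w)" "\<not> odd (t+1)" by (auto split: if_splits)
      then show False by simp
    qed
  qed
  then show ?thesis by (simp add: Fs_def)
qed

lemma vecl_rep_pos:
  assumes "\<And>y. l y \<ge> 0" "x \<in> {1..N}" "l x > 0" "odd x \<longleftrightarrow> s"
  shows "vecl N l (replicate k s) x > 0"
proof (induction k)
  case 0 then show ?case using assms by simp
next
  case (Suc k)
  have "vecl N l (replicate (Suc k) s) x = stepv N s (vecl N l (replicate k s)) x"
    by (simp add: vecl_snoc flip: replicate_append_same)
  also have "\<dots> > 0"
    by (rule stepv_pos[where y=x]) (use assms Suc vecl_nonneg in \<open>auto simp: okst_def\<close>)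
  finally show ?case .
qed

lemma vecl_ud_pos:
  assumes "\<And>y. l y \<ge> 0" "x \<ge> 1" "x + 2 * int p \<le> N" "l x > 0"
  shows "vecl N l (ud p) (x + 2 * int p) > 0"
  using assms
proof (induction p arbitrary: l x)
  case 0 then show ?case by simp
next
  case (Suc p)
  have nn: "\<And>y. stepv N True l y \<ge> 0" using Suc.prems by (simp add: stepv_nonneg)
  have nn2: "\<And>y. stepv N False (stepv N True l) y \<ge> 0" using nn by (simp add: stepv_nonneg)
  have a: "stepv N True l (x+1) > 0"
    by (rule stepv_pos[where y=x]) (use Suc.prems in \<open>auto simp: okst_def\<close>)
  have b: "stepv N False (stepv N True l) (x+2) > 0"
    by (rule stepv_pos[where y="x+1"]) (use Suc.prems a nn in \<open>auto simp: okst_def\<close>)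
  have "vecl N (stepv N False (stepv N True l)) (ud p) ((x+2) + 2 * int p) > 0"
    by (rule Suc.IH) (use Suc.prems nn2 b in auto)
  then show ?case by (simp add: ud_Suc vecl_Cons algebra_simps)
qed

lemma Fs_pos:
  assumes "\<And>y. l y \<ge> 0" "z \<in> {1..N}" "vecl N l w z > 0"
  shows "Fs N l w > 0"
proof -
  have "0 < vecl N l w z" by fact
  also have "\<dots> \<le> Fs N l w" unfolding Fs_def
    by (rule member_le_sum) (use assms vecl_nonneg in auto)
  finally show ?thesis .
qed

definition cw :: "nat \<Rightarrow> nat \<Rightarrow> bool list" where
  "cw n t = replicate (n - 2 * (t div 2)) (even t) @ ud (t div 2)"

lemma positive:
  assumes "t \<le> n"
  shows "Fs (2*int t+1) (e0 (2*int t+1)) (cw n t) > 0"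
proof -
  let ?N = "2*int t+1"
  have x0: "(?N + 1) div 2 = int t + 1" by simp
  have nn: "\<And>y. e0 ?N y \<ge> 0" by (simp add: e0_def)
  have p0: "e0 ?N (int t + 1) > 0" by (simp add: e0_def)
  have r: "vecl ?N (e0 ?N) (replicate (n - 2 * (t div 2)) (even t)) (int t + 1) > 0"
    by (rule vecl_rep_pos) (use nn p0 in auto)
  have u: "vecl ?N (vecl ?N (e0 ?N) (replicate (n - 2 * (t div 2)) (even t))) (ud (t div 2))
      (int t + 1 + 2 * int (t div 2)) > 0"
    by (rule vecl_ud_pos) (use r vecl_nonneg nn in auto)
  have "int t + 1 + 2 * int (t div 2) \<in> {1..?N}" by auto
  then show ?thesis
    by (intro Fs_pos[where l="e0 ?N" and z="int t + 1 + 2 * int (t div 2)"])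
       (use nn u in \<open>auto simp: cw_def vecl_append\<close>)
qed

lemma pkl_False_Cons: "pkl (False # w) = pkl w"
  by (cases w) auto

lemma pkl_ud: "pkl (ud p) = p"
  by (induction p) (auto simp: ud_Suc pkl_False_Cons)

lemma ud_Nil: "ud p = [] \<longleftrightarrow> p = 0"
  by (cases p) (auto simp: ud_Suc)

lemma hd_ud: "p \<ge> 1 \<Longrightarrow> hd (ud p) = True"
  by (cases p) (auto simp: ud_Suc)

lemma hd_ud': "ud p \<noteq> [] \<Longrightarrow> hd (ud p)"
  by (cases p) (auto simp: ud_Suc)

lemma pkl_rep_ud: "pkl (replicate k f @ ud p) = p"
proof (induction k)
  case 0 then show ?case by (simp add: pkl_ud)
next
  case (Suc k)
  show ?case
  proof (cases "replicate k f @ ud p = []")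
    case True then show ?thesis by (auto simp: ud_Nil)
  next
    case False
    have "hd (replicate k f @ ud p) = f \<or> (k = 0 \<and> hd (ud p) = True)"
      using False by (cases k) (auto simp: hd_ud')
    then show ?thesis using Suc False by (auto simp: pkl_Cons)
  qed
qed

lemma cw_props:
  assumes "t \<le> n" "n \<ge> 1"
  shows "cw n t \<noteq> []" "length (cw n t) = n" "hd (cw n t) = even t" "pkl (cw n t) = t div 2"
proof -
  show "length (cw n t) = n" using assms by (auto simp: cw_def ud_def length_concat sum_list_replicate)
  then show ne: "cw n t \<noteq> []" using assms by auto
  show "pkl (cw n t) = t div 2" by (simp add: cw_def pkl_rep_ud)
  show "hd (cw n t) = even t"
  proof (cases "n - 2 * (t div 2)")
    case 0
    then have "t \<le> 2 * (t div 2)" "t div 2 \<ge> 1" using assms by auto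
    then have "even t" "t div 2 \<ge> 1" by presburger+
    then show ?thesis using 0 by (simp add: cw_def hd_ud)
  next
    case (Suc k) then show ?thesis by (simp add: cw_def)
  qed
qed

abbreviation PP :: "nat \<Rightarrow> int set" where "PP n \<equiv> {- int n..int n}"

lemma sp_odd: "\<sigma> \<in> signed_perms n \<Longrightarrow> \<sigma> (- i) = - \<sigma> i"
  by (simp add: signed_perms_def)

lemma sp_zero: "\<sigma> \<in> signed_perms n \<Longrightarrow> \<sigma> 0 = 0"
  using sp_odd[of \<sigma> n 0] by simp

lemma sp_bij: "\<sigma> \<in> signed_perms n \<Longrightarrow> bij_betw \<sigma> (PP n) (PP n)"
  by (simp add: signed_perms_def)

lemma sp_out: "\<sigma> \<in> signed_perms n \<Longrightarrow> i \<notin> PP n \<Longrightarrow> \<sigma> i = i"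
  by (auto simp: signed_perms_def)

lemma sp_in: "\<sigma> \<in> signed_perms n \<Longrightarrow> i \<in> PP n \<Longrightarrow> \<sigma> i \<in> PP n"
  using sp_bij bij_betwE by blast

lemma sp_inj: "\<sigma> \<in> signed_perms n \<Longrightarrow> inj_on \<sigma> (PP n)"
  using sp_bij bij_betw_imp_inj_on by blast

lemma sp_surj: "\<sigma> \<in> signed_perms n \<Longrightarrow> j \<in> PP n \<Longrightarrow> \<exists>i\<in>PP n. \<sigma> i = j"
  using sp_bij by (metis bij_betw_iff_bijections)

lemma sp_nz: "\<sigma> \<in> signed_perms n \<Longrightarrow> i \<in> PP n \<Longrightarrow> i \<noteq> 0 \<Longrightarrow> \<sigma> i \<noteq> 0"
  using inj_onD[OF sp_inj[of \<sigma> n], of i 0] sp_zero[of \<sigma> n] by auto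

lemma sp_comp: "\<sigma> \<in> signed_perms n \<Longrightarrow> \<tau> \<in> signed_perms n \<Longrightarrow> \<sigma> \<circ> \<tau> \<in> signed_perms n"
  unfolding signed_perms_def by (auto intro: bij_betw_trans)

definition W :: "int \<Rightarrow> nat \<Rightarrow> (int \<Rightarrow> int) set" where
  "W N n = PiE {1..int n} (\<lambda>_. {1..N})"

definition ext :: "int \<Rightarrow> (int \<Rightarrow> int) \<Rightarrow> int \<Rightarrow> int" where
  "ext N u i = (if 0 < i then u i else if i < 0 then N + 1 - u (- i) else (N + 1) div 2)"

definition kl :: "int \<Rightarrow> (int \<Rightarrow> int) \<Rightarrow> int \<Rightarrow> int \<Rightarrow> bool" where
  "kl N u i j \<longleftrightarrow> ext N u i < ext N u j \<or> (ext N u i = ext N u j \<and> (if odd (ext N u i) then i < j else j < i))"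

definition tb :: "int \<Rightarrow> (int \<Rightarrow> int) \<Rightarrow> int \<Rightarrow> int" where
  "tb N u i = (if odd (ext N u i) then i else - i)"

lemma kl_alt: "kl N u i j \<longleftrightarrow> ext N u i < ext N u j \<or> (ext N u i = ext N u j \<and> tb N u i < tb N u j)"
  unfolding kl_def tb_def by (cases "odd (ext N u i)") auto

lemma tb_inj: "ext N u i = ext N u j \<Longrightarrow> tb N u i = tb N u j \<Longrightarrow> i = j"
  unfolding tb_def by (cases "odd (ext N u i)") auto

lemma kl_irrefl: "\<not> kl N u i i" by (simp add: kl_alt)
lemma kl_trans: "kl N u i j \<Longrightarrow> kl N u j k \<Longrightarrow> kl N u i k"
  unfolding kl_alt by (elim disjE conjE) auto
lemma kl_asym: "kl N u i j \<Longrightarrow> \<not> kl N u j i"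
  unfolding kl_alt by (elim disjE conjE) auto
lemma kl_total: "i \<noteq> j \<Longrightarrow> kl N u i j \<or> kl N u j i"
  unfolding kl_alt using tb_inj[of N u i j] by linarith

lemma ext_neg: "odd N \<Longrightarrow> ext N u (- i) = N + 1 - ext N u i"
proof -
  assume "odd N"
  then obtain k where k: "N = 2 * k + 1" by (auto elim: oddE)
  show ?thesis unfolding ext_def k by auto
qed

lemma kl_neg: "odd N \<Longrightarrow> kl N u (- j) (- i) \<longleftrightarrow> kl N u i j"
proof -
  assume N: "odd N"
  have "odd (N + 1 - ext N u i) \<longleftrightarrow> odd (ext N u i)" using N by simp
  then show ?thesis unfolding kl_def ext_neg[OF N] by auto
qed

lemma ext_range: "u \<in> W N n \<Longrightarrow> N \<ge> 1 \<Longrightarrow> i \<in> PP n \<Longrightarrow> ext N u i \<in> {1..N}"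
  unfolding W_def ext_def by (auto simp: PiE_iff)

definition rk :: "nat \<Rightarrow> int \<Rightarrow> (int \<Rightarrow> int) \<Rightarrow> int \<Rightarrow> int" where
  "rk n N u i = int (card {j \<in> PP n. kl N u j i}) - int n"

lemma rk_mono:
  assumes "i \<in> PP n" "kl N u i j"
  shows "rk n N u i < rk n N u j"
proof -
  have "{k \<in> PP n. kl N u k i} \<subset> {k \<in> PP n. kl N u k j}"
    using assms kl_trans kl_irrefl by blast
  then have "card {k \<in> PP n. kl N u k i} < card {k \<in> PP n. kl N u k j}"
    by (rule psubset_card_mono[rotated]) (rule finite_subset[of _ "PP n"], auto)
  then show ?thesis by (simp add: rk_def)
qed

lemma rk_inj: "inj_on (rk n N u) (PP n)"
proof (rule inj_onI)
  fix i j assume "i \<in> PP n" "j \<in> PP n" "rk n N u i = rk n N u j"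
  then show "i = j" using kl_total[of i j N u] rk_mono[of i n N u j] rk_mono[of j n N u i] by force
qed

lemma card_kl_split:
  assumes "i \<in> PP n"
  shows "card {k \<in> PP n. kl N u k i} + card {k \<in> PP n. kl N u i k} = 2 * n"
proof -
  have "card {k \<in> PP n. kl N u k i} + card {k \<in> PP n. kl N u i k}
      = card ({k \<in> PP n. kl N u k i} \<union> {k \<in> PP n. kl N u i k})"
    by (rule card_Un_disjoint[symmetric]) (auto dest: kl_asym intro: finite_subset[of _ "PP n"])
  also have "{k \<in> PP n. kl N u k i} \<union> {k \<in> PP n. kl N u i k} = PP n - {i}"
    using kl_total kl_irrefl by blast
  also have "card (PP n - {i}) = 2 * n" using assms by simp
  finally show ?thesis .
qed

lemma rk_range: "i \<in> PP n \<Longrightarrow> rk n N u i \<in> PP n"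
  using card_kl_split[of i n N u] by (auto simp: rk_def)

lemma rk_bij: "bij_betw (rk n N u) (PP n) (PP n)"
proof -
  have "rk n N u ` PP n \<subseteq> PP n" using rk_range by blast
  then have "rk n N u ` PP n = PP n" using endo_inj_surj rk_inj by blast
  then show ?thesis using rk_inj unfolding bij_betw_def by blast
qed

lemma rk_neg:
  assumes N: "odd N" and i: "i \<in> PP n"
  shows "rk n N u (- i) = - rk n N u i"
proof -
  have "{j \<in> PP n. kl N u j (- i)} = uminus ` {k \<in> PP n. kl N u i k}"
  proof -
    have kn: "kl N u j (- i) \<longleftrightarrow> kl N u i (- j)" for j using kl_neg[OF N, of u "-j" i] by simp
    show ?thesis
    proof
      show "{j \<in> PP n. kl N u j (- i)} \<subseteq> uminus ` {k \<in> PP n. kl N u i k}"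
      proof
        fix j assume "j \<in> {j \<in> PP n. kl N u j (- i)}"
        then have "- j \<in> {k \<in> PP n. kl N u i k}" using kn by auto
        then show "j \<in> uminus ` {k \<in> PP n. kl N u i k}" by (metis image_eqI minus_minus)
      qed
    next
      show "uminus ` {k \<in> PP n. kl N u i k} \<subseteq> {j \<in> PP n. kl N u j (- i)}" using kn by auto
    qed
  qed
  then have "card {j \<in> PP n. kl N u j (- i)} = card {k \<in> PP n. kl N u i k}"
    by (simp add: card_image)
  then show ?thesis using card_kl_split[OF i, of N u] by (simp add: rk_def)
qed

definition st :: "nat \<Rightarrow> int \<Rightarrow> (int \<Rightarrow> int) \<Rightarrow> int \<Rightarrow> int" where
  "st n N u = (\<lambda>i. if i \<in> PP n then the_inv_into (PP n) (rk n N u) i else i)"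

lemma rk_img: "i \<in> PP n \<Longrightarrow> i \<in> rk n N u ` PP n"
  using rk_bij[of n N u] by (simp add: bij_betw_def)

lemma st_in: "i \<in> PP n \<Longrightarrow> st n N u i \<in> PP n"
  using the_inv_into_into[OF rk_inj rk_img order_refl] unfolding st_def by simp

lemma rk_st: "i \<in> PP n \<Longrightarrow> rk n N u (st n N u i) = i"
  using f_the_inv_into_f[OF rk_inj rk_img] unfolding st_def by simp

lemma st_rk: "j \<in> PP n \<Longrightarrow> st n N u (rk n N u j) = j"
  unfolding st_def using rk_bij rk_range rk_inj by (simp add: the_inv_into_f_f)

lemma st_bij: "bij_betw (st n N u) (PP n) (PP n)"
proof -
  have "bij_betw (the_inv_into (PP n) (rk n N u)) (PP n) (PP n)"
    using rk_bij bij_betw_the_inv_into by blast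
  then show ?thesis by (rule bij_betw_cong[THEN iffD1, rotated]) (simp add: st_def)
qed

lemma st_sp: assumes N: "odd N" shows "st n N u \<in> signed_perms n"
proof -
  have odd: "st n N u (- i) = - st n N u i" for i
  proof (cases "i \<in> PP n")
    case True
    then have mi: "- i \<in> PP n" by auto
    have "rk n N u (- st n N u i) = - i" using rk_neg[OF N st_in[OF True]] rk_st[OF True] by simp
    then have "st n N u (rk n N u (- st n N u i)) = st n N u (- i)" by simp
    moreover have "- st n N u i \<in> PP n" using st_in[OF True, of N u] by auto
    ultimately show ?thesis using st_rk by metis
  next
    case False
    then have "- i \<notin> PP n" by auto
    then have "st n N u (- i) = - i" by (simp only: st_def if_False)
    moreover have "st n N u i = i" using False by (simp only: st_def if_False)
    ultimately show ?thesis by simp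
  qed
  moreover have "\<forall>i. \<bar>i\<bar> > int n \<longrightarrow> st n N u i = i" by (auto simp: st_def)
  ultimately show ?thesis using st_bij by (auto simp: signed_perms_def)
qed

definition sorts :: "nat \<Rightarrow> int \<Rightarrow> (int \<Rightarrow> int) \<Rightarrow> (int \<Rightarrow> int) \<Rightarrow> bool" where
  "sorts n N u \<sigma> \<longleftrightarrow> (\<forall>a\<in>PP n. \<forall>b\<in>PP n. a < b \<longrightarrow> kl N u (\<sigma> a) (\<sigma> b))"

lemma st_sorts: "sorts n N u (st n N u)"
  unfolding sorts_def
proof (intro ballI impI)
  fix a b assume ab: "a \<in> PP n" "b \<in> PP n" "a < b"
  have ne: "st n N u a \<noteq> st n N u b" using ab rk_st by (metis less_irrefl)
  show "kl N u (st n N u a) (st n N u b)"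
  proof (rule ccontr)
    assume "\<not> kl N u (st n N u a) (st n N u b)"
    then have "kl N u (st n N u b) (st n N u a)" using kl_total ne by blast
    then have "rk n N u (st n N u b) < rk n N u (st n N u a)" using rk_mono st_in ab by blast
    then show False using ab rk_st by simp
  qed
qed

lemma sorts_rk:
  assumes s: "\<sigma> \<in> signed_perms n" and so: "sorts n N u \<sigma>" and a: "a \<in> PP n"
  shows "rk n N u (\<sigma> a) = a"
proof -
  have "{j \<in> PP n. kl N u j (\<sigma> a)} = \<sigma> ` {b \<in> PP n. b < a}"
  proof
    show "\<sigma> ` {b \<in> PP n. b < a} \<subseteq> {j \<in> PP n. kl N u j (\<sigma> a)}"
      using so a sp_in[OF s] unfolding sorts_def by auto
  next
    show "{j \<in> PP n. kl N u j (\<sigma> a)} \<subseteq> \<sigma> ` {b \<in> PP n. b < a}"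
    proof
      fix j assume j: "j \<in> {j \<in> PP n. kl N u j (\<sigma> a)}"
      then obtain b where b: "b \<in> PP n" "\<sigma> b = j" using sp_surj[OF s] by blast
      have "b < a"
      proof (rule ccontr)
        assume "\<not> b < a"
        then have "b = a \<or> a < b" by auto
        then show False using j b so a kl_irrefl kl_asym unfolding sorts_def by blast
      qed
      then show "j \<in> \<sigma> ` {b \<in> PP n. b < a}" using b by auto
    qed
  qed
  moreover have "inj_on \<sigma> {b \<in> PP n. b < a}" using sp_inj[OF s] by (rule inj_on_subset) auto
  ultimately have "card {j \<in> PP n. kl N u j (\<sigma> a)} = card {b \<in> PP n. b < a}"
    by (simp add: card_image)
  also have "{b \<in> PP n. b < a} = {- int n..a - 1}" using a by auto
  also have "card \<dots> = nat (a + int n)" by simp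
  finally show ?thesis using a by (simp add: rk_def)
qed

lemma sorts_unique:
  assumes s: "\<sigma> \<in> signed_perms n" and so: "sorts n N u \<sigma>"
  shows "\<sigma> = st n N u"
proof
  fix a show "\<sigma> a = st n N u a"
  proof (cases "a \<in> PP n")
    case True
    then show ?thesis using sorts_rk[OF s so True] st_rk[OF sp_in[OF s True]] by metis
  next
    case False then show ?thesis using sp_out[OF s, of a] by (auto simp: st_def)
  qed
qed

lemma sorts_iff_st:
  assumes "\<sigma> \<in> signed_perms n" "odd N"
  shows "sorts n N u \<sigma> \<longleftrightarrow> st n N u = \<sigma>"
  using sorts_unique[OF assms(1)] st_sorts by metis

definition comb :: "int \<Rightarrow> int \<Rightarrow> int \<Rightarrow> int" where
  "comb N y x = (y - 1) * N + (if odd y then x else N + 1 - x)"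

definition psi :: "nat \<Rightarrow> int \<Rightarrow> int \<Rightarrow> (int \<Rightarrow> int) \<Rightarrow> (int \<Rightarrow> int) \<Rightarrow> int \<Rightarrow> int" where
  "psi n N M u v = (\<lambda>i. if i \<in> {1..int n} then comb N (ext M v (rk n N u i)) (u i) else undefined)"

lemma comb_lo: "x \<in> {1..N} \<Longrightarrow> (y - 1) * N + 1 \<le> comb N y x"
  unfolding comb_def by auto

lemma comb_hi: "x \<in> {1..N} \<Longrightarrow> comb N y x \<le> y * N"
  unfolding comb_def by (auto simp: algebra_simps)

lemma comb_lt:
  assumes "x \<in> {1..N}" "x' \<in> {1..N}" "y < y'"
  shows "comb N y x < comb N y' x'"
proof -
  have "y * N \<le> (y' - 1) * N" using assms by (intro mult_right_mono) auto
  then show ?thesis using comb_hi[OF assms(1), of y] comb_lo[OF assms(2), of y'] by linarith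
qed

lemma comb_inj:
  assumes "x \<in> {1..N}" "x' \<in> {1..N}" "comb N y x = comb N y' x'"
  shows "y = y' \<and> x = x'"
proof -
  have "y = y'" using comb_lt[OF assms(1,2)] comb_lt[OF assms(2,1)] assms(3) by (metis less_irrefl linorder_neqE)
  then show ?thesis using assms(3) unfolding comb_def by (auto split: if_splits)
qed

lemma comb_parity: "odd N \<Longrightarrow> odd (comb N y x) \<longleftrightarrow> (odd y \<longleftrightarrow> odd x)"
  unfolding comb_def by (cases "odd y") auto

lemma rk_zero: "odd N \<Longrightarrow> rk n N u 0 = 0"
  using rk_neg[of N 0 n u] by simp

lemma ext_psi:
  assumes N: "odd N" "N \<ge> 1" and M: "odd M" and u: "u \<in> W N n" and i: "i \<in> PP n"
  shows "ext (N*M) (psi n N M u v) i = comb N (ext M v (rk n N u i)) (ext N u i)"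
proof -
  consider "0 < i" | "i < 0" | "i = 0" by linarith
  then show ?thesis
  proof cases
    case 1 then show ?thesis using i by (simp add: ext_def psi_def)
  next
    case 2
    have mi: "- i \<in> {1..int n}" using 2 i by auto
    have r: "rk n N u (- i) = - rk n N u i" using rk_neg[OF N(1) i] .
    define y where "y = ext M v (rk n N u i)"
    have ey: "ext M v (rk n N u (- i)) = M + 1 - y" unfolding r y_def by (rule ext_neg[OF M])
    have pe: "odd (M + 1 - y) \<longleftrightarrow> odd y" using M by simp
    have "ext (N*M) (psi n N M u v) i = N * M + 1 - comb N (M + 1 - y) (u (- i))"
      using 2 mi ey by (simp add: ext_def psi_def)
    also have "\<dots> = comb N y (N + 1 - u (- i))"
      unfolding comb_def using pe by (cases "odd y") (auto simp: algebra_simps)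
    also have "N + 1 - u (- i) = ext N u i" using 2 by (simp add: ext_def)
    finally show ?thesis by (simp add: y_def)
  next
    case 3
    obtain a where a: "N = 2*a+1" using N by (auto elim: oddE)
    obtain b where b: "M = 2*b+1" using M by (auto elim: oddE)
    have "ext (N*M) (psi n N M u v) i = (N*M+1) div 2" using 3 by (simp add: ext_def)
    also have "N*M+1 = 2 * (2*a*b + a + b + 1)" unfolding a b by (simp add: algebra_simps)
    also have "2 * (2*a*b + a + b + 1) div 2 = b * (2*a+1) + (a+1)" by (simp add: algebra_simps)
    also have "\<dots> = comb N (b+1) (a+1)" unfolding comb_def a by (auto simp: algebra_simps)
    also have "b + 1 = ext M v (rk n N u i)" using 3 rk_zero[OF N(1)] by (simp add: ext_def b)
    also have "a + 1 = ext N u i" using 3 by (simp add: ext_def a)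
    finally show ?thesis .
  qed
qed

lemma psi_sorts:
  assumes N: "odd N" "N \<ge> 1" and M: "odd M" "M \<ge> 1" and u: "u \<in> W N n" and v: "v \<in> W M n"
  shows "sorts n (N*M) (psi n N M u v) (st n N u \<circ> st n M v)"
  unfolding sorts_def
proof (intro ballI impI)
  fix a b assume ab: "a \<in> PP n" "b \<in> PP n" "a < b"
  define \<alpha> where "\<alpha> = st n M v a"
  define \<beta> where "\<beta> = st n M v b"
  have \<alpha>: "\<alpha> \<in> PP n" and \<beta>: "\<beta> \<in> PP n" using st_in ab unfolding \<alpha>_def \<beta>_def by auto
  have klv: "kl M v \<alpha> \<beta>" using st_sorts[of n M v] ab unfolding sorts_def \<alpha>_def \<beta>_def by blast
  let ?\<pi> = "st n N u"
  have pa: "?\<pi> \<alpha> \<in> PP n" and pb: "?\<pi> \<beta> \<in> PP n" using st_in \<alpha> \<beta> by auto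
  have Ea: "ext (N*M) (psi n N M u v) (?\<pi> \<alpha>) = comb N (ext M v \<alpha>) (ext N u (?\<pi> \<alpha>))"
    using ext_psi[OF N M(1) u pa] rk_st[OF \<alpha>] by simp
  have Eb: "ext (N*M) (psi n N M u v) (?\<pi> \<beta>) = comb N (ext M v \<beta>) (ext N u (?\<pi> \<beta>))"
    using ext_psi[OF N M(1) u pb] rk_st[OF \<beta>] by simp
  have xa: "ext N u (?\<pi> \<alpha>) \<in> {1..N}" and xb: "ext N u (?\<pi> \<beta>) \<in> {1..N}"
    using ext_range[OF u N(2)] pa pb by auto
  have sortu: "\<And>p q. p \<in> PP n \<Longrightarrow> q \<in> PP n \<Longrightarrow> p < q \<Longrightarrow> kl N u (?\<pi> p) (?\<pi> q)"
    using st_sorts[of n N u] unfolding sorts_def by blast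
  have NMo: "odd (N*M)" using N M by simp
  show "kl (N*M) (psi n N M u v) ((?\<pi> \<circ> st n M v) a) ((?\<pi> \<circ> st n M v) b)"
  proof -
    have goal: "kl (N*M) (psi n N M u v) (?\<pi> \<alpha>) (?\<pi> \<beta>)"
    proof (cases "ext M v \<alpha> < ext M v \<beta>")
      case True
      then show ?thesis unfolding kl_def Ea Eb using comb_lt[OF xa xb True] by simp
    next
      case False
      then have eq: "ext M v \<alpha> = ext M v \<beta>" and tie: "if odd (ext M v \<alpha>) then \<alpha> < \<beta> else \<beta> < \<alpha>"
        using klv unfolding kl_def by auto
      define y where "y = ext M v \<alpha>"
      show ?thesis
      proof (cases "odd y")
        case True
        then have "\<alpha> < \<beta>" using tie y_def by simp
        then have klu: "kl N u (?\<pi> \<alpha>) (?\<pi> \<beta>)" using sortu \<alpha> \<beta> by blast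
        define xa where "xa = ext N u (?\<pi> \<alpha>)"
        define xb where "xb = ext N u (?\<pi> \<beta>)"
        have ca: "comb N y xa = (y - 1) * N + xa" and cb: "comb N y xb = (y - 1) * N + xb"
          using True by (simp_all add: comb_def)
        have pa: "odd (comb N y xa) \<longleftrightarrow> odd xa" using comb_parity[OF N(1), of y xa] True by simp
        have k: "xa < xb \<or> (xa = xb \<and> (if odd xa then ?\<pi> \<alpha> < ?\<pi> \<beta> else ?\<pi> \<beta> < ?\<pi> \<alpha>))"
          using klu unfolding kl_def xa_def xb_def .
        have "comb N y xa < comb N y xb \<or> (comb N y xa = comb N y xb \<and>
           (if odd (comb N y xa) then ?\<pi> \<alpha> < ?\<pi> \<beta> else ?\<pi> \<beta> < ?\<pi> \<alpha>))"
          using k unfolding ca cb pa[unfolded ca] by auto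
        then show ?thesis unfolding kl_def Ea Eb eq[symmetric] y_def[symmetric] xa_def xb_def .
      next
        case False
        then have "\<beta> < \<alpha>" using tie y_def by simp
        then have klu: "kl N u (?\<pi> \<beta>) (?\<pi> \<alpha>)" using sortu \<alpha> \<beta> by blast
        define xa where "xa = ext N u (?\<pi> \<alpha>)"
        define xb where "xb = ext N u (?\<pi> \<beta>)"
        have ca: "comb N y xa = (y - 1) * N + (N + 1 - xa)" and cb: "comb N y xb = (y - 1) * N + (N + 1 - xb)"
          using False by (simp_all add: comb_def)
        have pa: "odd (comb N y xa) \<longleftrightarrow> \<not> odd xa" using comb_parity[OF N(1), of y xa] False by simp
        have k: "xb < xa \<or> (xb = xa \<and> (if odd xb then ?\<pi> \<beta> < ?\<pi> \<alpha> else ?\<pi> \<alpha> < ?\<pi> \<beta>))"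
          using klu unfolding kl_def xa_def xb_def .
        have "comb N y xa < comb N y xb \<or> (comb N y xa = comb N y xb \<and>
           (if odd (comb N y xa) then ?\<pi> \<alpha> < ?\<pi> \<beta> else ?\<pi> \<beta> < ?\<pi> \<alpha>))"
        proof (cases "xb < xa")
          case True then show ?thesis unfolding ca cb by simp
        next
          case False
          then have "xb = xa" "if odd xb then ?\<pi> \<beta> < ?\<pi> \<alpha> else ?\<pi> \<alpha> < ?\<pi> \<beta>" using k by auto
          then show ?thesis using pa by (auto split: if_splits)
        qed
        then show ?thesis unfolding kl_def Ea Eb eq[symmetric] y_def[symmetric] xa_def xb_def .
      qed
    qed
    then show ?thesis by (simp add: \<alpha>_def \<beta>_def)
  qed
qed

lemma st_psi:
  assumes N: "odd N" "N \<ge> 1" and M: "odd M" "M \<ge> 1" and u: "u \<in> W N n" and v: "v \<in> W M n"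
  shows "st n (N*M) (psi n N M u v) = st n N u \<circ> st n M v"
proof -
  have "st n N u \<circ> st n M v \<in> signed_perms n" using st_sp N M sp_comp by blast
  then show ?thesis using sorts_unique psi_sorts[OF N M u v] by metis
qed

lemma finite_W: "finite (W N n)"
  unfolding W_def by (rule finite_PiE) auto

lemma card_W: "N \<ge> 0 \<Longrightarrow> card (W N n) = nat N ^ n"
  unfolding W_def by (simp add: card_PiE)

lemma finite_sp: "finite (signed_perms n)"
proof -
  have "inj_on (\<lambda>\<sigma>. restrict \<sigma> (PP n)) (signed_perms n)"
  proof (rule inj_onI)
    fix \<sigma> \<tau> assume a: "\<sigma> \<in> signed_perms n" "\<tau> \<in> signed_perms n" "restrict \<sigma> (PP n) = restrict \<tau> (PP n)"
    show "\<sigma> = \<tau>"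
    proof
      fix i show "\<sigma> i = \<tau> i"
      proof (cases "i \<in> PP n")
        case True then show ?thesis using fun_cong[OF a(3), of i] by simp
      next
        case False then show ?thesis using sp_out[OF a(1) False] sp_out[OF a(2) False] by simp
      qed
    qed
  qed
  moreover have "(\<lambda>\<sigma>. restrict \<sigma> (PP n)) ` signed_perms n \<subseteq> PiE (PP n) (\<lambda>_. PP n)"
    using sp_in by fastforce
  moreover have "finite (PiE (PP n) (\<lambda>_. PP n))" by (rule finite_PiE) auto
  ultimately show ?thesis by (metis finite_imageD finite_subset)
qed

lemma psi_W:
  assumes N: "N \<ge> 1" and M: "M \<ge> 1" and u: "u \<in> W N n" and v: "v \<in> W M n"
  shows "psi n N M u v \<in> W (N*M) n"
proof -
  have "psi n N M u v i \<in> {1..N*M}" if i: "i \<in> {1..int n}" for i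
  proof -
    have ri: "rk n N u i \<in> PP n" using rk_range i by auto
    have y: "ext M v (rk n N u i) \<in> {1..M}" using ext_range[OF v M ri] .
    have x: "u i \<in> {1..N}" using u i by (auto simp: W_def)
    define y where "y = ext M v (rk n N u i)"
    have y1: "y \<in> {1..M}" using y by (simp add: y_def)
    have "y * N \<le> M * N" using y1 N by (intro mult_right_mono) auto
    moreover have "0 \<le> (y - 1) * N" using y1 N by auto
    moreover have "(y - 1) * N + 1 \<le> comb N y (u i)" by (rule comb_lo[OF x])
    moreover have "comb N y (u i) \<le> y * N" by (rule comb_hi[OF x])
    ultimately have "comb N y (u i) \<in> {1..N*M}" by (auto simp: mult.commute)
    then show ?thesis using i by (simp add: psi_def y_def)
  qed
  then show ?thesis by (auto simp: W_def psi_def)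
qed

lemma W_eqI: "u \<in> W N n \<Longrightarrow> u' \<in> W N n \<Longrightarrow> (\<And>i. i \<in> {1..int n} \<Longrightarrow> u i = u' i) \<Longrightarrow> u = u'"
  unfolding W_def by (rule PiE_ext) auto

lemma psi_inj:
  assumes N: "odd N" "N \<ge> 1" and M: "odd M" "M \<ge> 1"
  shows "inj_on (\<lambda>(u, v). psi n N M u v) (W N n \<times> W M n)"
proof (rule inj_onI, clarify)
  fix u v u' v' assume u: "u \<in> W N n" and v: "v \<in> W M n" and u': "u' \<in> W N n" and v': "v' \<in> W M n"
    and eq: "psi n N M u v = psi n N M u' v'"
  have c: "u i = u' i \<and> ext M v (rk n N u i) = ext M v' (rk n N u' i)" if i: "i \<in> {1..int n}" for i
  proof -
    have "comb N (ext M v (rk n N u i)) (u i) = comb N (ext M v' (rk n N u' i)) (u' i)"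
      using fun_cong[OF eq, of i] i by (simp add: psi_def)
    moreover have "u i \<in> {1..N}" "u' i \<in> {1..N}" using u u' i by (auto simp: W_def)
    ultimately show ?thesis using comb_inj by blast
  qed
  have uu: "u = u'" using c by (intro W_eqI[OF u u']) auto
  have "v k = v' k" if k: "k \<in> {1..int n}" for k
  proof -
    have kP: "k \<in> PP n" using k by auto
    define i where "i = st n N u k"
    have iP: "i \<in> PP n" using st_in kP by (simp add: i_def)
    have ri: "rk n N u i = k" using rk_st kP by (simp add: i_def)
    have "i \<noteq> 0" using sp_nz[OF st_sp[OF N(1)] kP] k by (auto simp: i_def)
    then consider "0 < i" | "i < 0" by linarith
    then show ?thesis
    proof cases
      case 1
      then have "i \<in> {1..int n}" using iP by auto
      then have "ext M v k = ext M v' k" using c[of i] ri uu by simp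
      then show ?thesis using k by (simp add: ext_def)
    next
      case 2
      then have mi: "- i \<in> {1..int n}" using iP by auto
      have "rk n N u (- i) = - k" using rk_neg[OF N(1) iP] ri by simp
      then have "ext M v (- k) = ext M v' (- k)" using c[OF mi] uu by simp
      then show ?thesis using k by (simp add: ext_def)
    qed
  qed
  then have "v = v'" by (intro W_eqI[OF v v'])
  then show "u = u' \<and> v = v'" using uu by simp
qed

lemma psi_image:
  assumes N: "odd N" "N \<ge> 1" and M: "odd M" "M \<ge> 1"
  shows "(\<lambda>(u, v). psi n N M u v) ` (W N n \<times> W M n) = W (N*M) n"
proof (rule card_seteq)
  show "finite (W (N*M) n)" by (rule finite_W)
  show "(\<lambda>(u, v). psi n N M u v) ` (W N n \<times> W M n) \<subseteq> W (N*M) n"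
    using psi_W N M by auto
  have "card ((\<lambda>(u, v). psi n N M u v) ` (W N n \<times> W M n)) = card (W N n \<times> W M n)"
    by (rule card_image[OF psi_inj[OF N M]])
  also have "\<dots> = nat N ^ n * nat M ^ n" using N M by (simp add: card_cartesian_product card_W)
  also have "\<dots> = nat (N*M) ^ n" using N M by (simp add: nat_mult_distrib power_mult_distrib)
  also have "\<dots> = card (W (N*M) n)" using N M by (simp add: card_W)
  finally show "card (W (N*M) n) \<le> card ((\<lambda>(u, v). psi n N M u v) ` (W N n \<times> W M n))" by simp
qed

definition rho :: "nat \<Rightarrow> int \<Rightarrow> (int \<Rightarrow> int) \<Rightarrow> rat" where
  "rho n N = (\<lambda>\<sigma>. if \<sigma> \<in> signed_perms n then of_nat (card {u \<in> W N n. st n N u = \<sigma>}) else 0)"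

lemma gmult_rho:
  assumes N: "odd N" "N \<ge> 1" and M: "odd M" "M \<ge> 1"
  shows "gmult n (rho n N) (rho n M) = rho n (N*M)"
proof
  fix \<sigma>
  define T where "T = {(\<pi>, \<tau>) \<in> signed_perms n \<times> signed_perms n. \<pi> \<circ> \<tau> = \<sigma>}"
  define A where "A = (\<lambda>\<pi>. {u \<in> W N n. st n N u = \<pi>})"
  define B where "B = (\<lambda>\<tau>. {v \<in> W M n. st n M v = \<tau>})"
  define X where "X = {(u, v) \<in> W N n \<times> W M n. st n N u \<circ> st n M v = \<sigma>}"
  have finT: "finite T" unfolding T_def using finite_sp by (auto intro: finite_subset[of _ "signed_perms n \<times> signed_perms n"])
  have "gmult n (rho n N) (rho n M) \<sigma> = (\<Sum>(\<pi>, \<tau>)\<in>T. of_nat (card (A \<pi> \<times> B \<tau>)))"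
    unfolding gmult_def T_def[symmetric]
    by (rule sum.cong[OF refl]) (clarsimp simp: T_def rho_def A_def B_def card_cartesian_product)
  also have "\<dots> = of_nat (\<Sum>(\<pi>, \<tau>)\<in>T. card (A \<pi> \<times> B \<tau>))"
    by (simp add: case_prod_beta)
  also have "(\<Sum>(\<pi>, \<tau>)\<in>T. card (A \<pi> \<times> B \<tau>)) = card (\<Union>(\<pi>, \<tau>)\<in>T. A \<pi> \<times> B \<tau>)"
  proof -
    have "card (\<Union>p\<in>T. (\<lambda>(\<pi>, \<tau>). A \<pi> \<times> B \<tau>) p) = (\<Sum>p\<in>T. card ((\<lambda>(\<pi>, \<tau>). A \<pi> \<times> B \<tau>) p))"
      by (rule card_UN_disjoint[OF finT]) (auto simp: A_def B_def finite_W)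
    then show ?thesis by (simp add: case_prod_beta)
  qed
  also have "(\<Union>(\<pi>, \<tau>)\<in>T. A \<pi> \<times> B \<tau>) = X"
  proof (rule equalityI; rule subsetI)
    fix p assume "p \<in> (\<Union>(\<pi>, \<tau>)\<in>T. A \<pi> \<times> B \<tau>)"
    then obtain \<pi> \<tau> where "(\<pi>, \<tau>) \<in> T" "p \<in> A \<pi> \<times> B \<tau>" by blast
    then show "p \<in> X" unfolding T_def A_def B_def X_def by auto
  next
    fix p assume p: "p \<in> X"
    obtain u v where uv: "p = (u, v)" by (cases p)
    have "(st n N u, st n M v) \<in> T" using p uv st_sp[OF N(1)] st_sp[OF M(1)] unfolding X_def T_def by auto
    moreover have "p \<in> A (st n N u) \<times> B (st n M v)" using p uv unfolding X_def A_def B_def by auto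
    ultimately show "p \<in> (\<Union>(\<pi>, \<tau>)\<in>T. A \<pi> \<times> B \<tau>)" by blast
  qed
  also have "card X = card ((\<lambda>(u, v). psi n N M u v) ` X)"
    by (rule card_image[symmetric], rule inj_on_subset[OF psi_inj[OF N M]]) (auto simp: X_def)
  also have "(\<lambda>(u, v). psi n N M u v) ` X = {w \<in> W (N*M) n. st n (N*M) w = \<sigma>}"
  proof
    show "(\<lambda>(u, v). psi n N M u v) ` X \<subseteq> {w \<in> W (N*M) n. st n (N*M) w = \<sigma>}"
      using psi_W st_psi N M unfolding X_def by auto
  next
    show "{w \<in> W (N*M) n. st n (N*M) w = \<sigma>} \<subseteq> (\<lambda>(u, v). psi n N M u v) ` X"
    proof
      fix w assume w: "w \<in> {w \<in> W (N*M) n. st n (N*M) w = \<sigma>}"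
      have "w \<in> (\<lambda>(u, v). psi n N M u v) ` (W N n \<times> W M n)" using psi_image[OF N M, of n] w by simp
      then obtain p where p: "p \<in> W N n \<times> W M n" "w = (\<lambda>(u, v). psi n N M u v) p" by blast
      obtain u v where "p = (u, v)" by (cases p)
      then have uv: "u \<in> W N n" "v \<in> W M n" "w = psi n N M u v" using p by auto
      then have "(u, v) \<in> X" using w st_psi[OF N M] unfolding X_def by auto
      then show "w \<in> (\<lambda>(u, v). psi n N M u v) ` X" using uv by force
    qed
  qed
  also have "of_nat (card {w \<in> W (N*M) n. st n (N*M) w = \<sigma>}) = rho n (N*M) \<sigma>"
  proof (cases "\<sigma> \<in> signed_perms n")
    case True then show ?thesis by (simp add: rho_def)
  next
    case False
    have "odd (N*M)" using N M by simp
    then have e: "{w \<in> W (N*M) n. st n (N*M) w = \<sigma>} = {}" using st_sp False by blast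
    show ?thesis using False by (simp add: rho_def e)
  qed
  finally show "gmult n (rho n N) (rho n M) \<sigma> = rho n (N*M) \<sigma>" .
qed

definition vv :: "int \<Rightarrow> (int \<Rightarrow> int) \<Rightarrow> nat \<Rightarrow> int" where
  "vv N v j = (if j = 0 then (N + 1) div 2 else v (int j))"

definition chn :: "int \<Rightarrow> (nat \<Rightarrow> bool) \<Rightarrow> nat \<Rightarrow> (int \<Rightarrow> int) \<Rightarrow> bool" where
  "chn N s m v \<longleftrightarrow> (\<forall>j<m. okst (s j) (vv N v j) (vv N v (Suc j)))"

lemma vv_upd: "j \<le> m \<Longrightarrow> vv N (v(1 + int m := c)) j = vv N v j"
  by (simp add: vv_def)

lemma vv_upd_same: "vv N (v(1 + int m := c)) (Suc m) = c"
  by (simp add: vv_def)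

lemma chn_upd: "chn N s m (v(1 + int m := c)) = chn N s m v"
  unfolding chn_def by (auto simp: vv_upd)

lemma chn_Suc: "chn N s (Suc m) v \<longleftrightarrow> chn N s m v \<and> okst (s m) (vv N v m) (vv N v (Suc m))"
  unfolding chn_def by (auto simp: less_Suc_eq)

lemma W_upd_in:
  assumes "v \<in> W N (Suc m)"
  shows "v(1 + int m := undefined) \<in> W N m"
  using assms unfolding W_def by (auto simp: PiE_iff extensional_def)

lemma W_upd_out:
  assumes "v \<in> W N m" "z \<in> {1..N}"
  shows "v(1 + int m := z) \<in> W N (Suc m)"
  using assms unfolding W_def by (auto simp: PiE_iff extensional_def)

lemma W_undef: "v \<in> W N m \<Longrightarrow> v (1 + int m) = undefined"
  unfolding W_def by (auto simp: PiE_iff extensional_def)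

lemma vv_range: "v \<in> W N m \<Longrightarrow> N \<ge> 1 \<Longrightarrow> j \<le> m \<Longrightarrow> vv N v j \<in> {1..N}"
  unfolding W_def vv_def by (auto simp: PiE_iff)

lemma cnt_step:
  assumes z: "z \<in> {1..N}"
  shows "card {v \<in> W N (Suc m). chn N s (Suc m) v \<and> vv N v (Suc m) = z}
       = card {v \<in> W N m. chn N s m v \<and> okst (s m) (vv N v m) z}"
proof (rule bij_betw_same_card[where f = "\<lambda>v. v(1 + int m := undefined)"])
  show "bij_betw (\<lambda>v. v(1 + int m := undefined))
     {v \<in> W N (Suc m). chn N s (Suc m) v \<and> vv N v (Suc m) = z}
     {v \<in> W N m. chn N s m v \<and> okst (s m) (vv N v m) z}"
  proof (rule bij_betwI[where g = "\<lambda>v. v(1 + int m := z)"])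
    show "(\<lambda>v. v(1 + int m := undefined)) \<in> {v \<in> W N (Suc m). chn N s (Suc m) v \<and> vv N v (Suc m) = z}
        \<rightarrow> {v \<in> W N m. chn N s m v \<and> okst (s m) (vv N v m) z}"
      using W_upd_in by (auto simp: chn_Suc chn_upd vv_upd)
    show "(\<lambda>v. v(1 + int m := z)) \<in> {v \<in> W N m. chn N s m v \<and> okst (s m) (vv N v m) z}
        \<rightarrow> {v \<in> W N (Suc m). chn N s (Suc m) v \<and> vv N v (Suc m) = z}"
      using W_upd_out[OF _ z] by (auto simp: chn_Suc chn_upd vv_upd vv_upd_same)
    show "v(1 + int m := undefined, 1 + int m := z) = v"
      if "v \<in> {v \<in> W N (Suc m). chn N s (Suc m) v \<and> vv N v (Suc m) = z}" for v
      using that by (auto simp: vv_def fun_eq_iff)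
    show "v(1 + int m := z, 1 + int m := undefined) = v"
      if "v \<in> {v \<in> W N m. chn N s m v \<and> okst (s m) (vv N v m) z}" for v
      using that W_undef[of v N m] by (auto simp: fun_eq_iff)
  qed
qed

lemma W_zero: "W N 0 = {\<lambda>_. undefined}"
  unfolding W_def by simp

lemma cnt_vec:
  assumes N: "N \<ge> 1"
  shows "int (card {v \<in> W N m. chn N s m v \<and> vv N v m = z}) = vecl N (e0 N) (map s [0..<m]) z"
proof (induction m arbitrary: z)
  case 0
  then show ?case by (simp add: W_zero chn_def vv_def e0_def)
next
  case (Suc m)
  have map: "map s [0..<Suc m] = map s [0..<m] @ [s m]" by simp
  show ?case
  proof (cases "z \<in> {1..N}")
    case False
    have "{v \<in> W N (Suc m). chn N s (Suc m) v \<and> vv N v (Suc m) = z} = {}"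
      using vv_range[OF _ N, of _ "Suc m" "Suc m"] False by auto
    then have "card {v \<in> W N (Suc m). chn N s (Suc m) v \<and> vv N v (Suc m) = z} = 0" by (simp only: card.empty)
    moreover have "vecl N (e0 N) (map s [0..<Suc m]) z = 0"
      unfolding map vecl_snoc stepv_def using False by auto
    ultimately show ?thesis by simp
  next
    case True
    define S where "S = (\<lambda>y. {v \<in> W N m. chn N s m v \<and> vv N v m = y})"
    have "{v \<in> W N m. chn N s m v \<and> okst (s m) (vv N v m) z}
        = (\<Union>y\<in>{y\<in>{1..N}. okst (s m) y z}. S y)"
      unfolding S_def using vv_range[OF _ N, of _ m m] by auto
    moreover have "card (\<Union>y\<in>{y\<in>{1..N}. okst (s m) y z}. S y) = (\<Sum>y\<in>{y\<in>{1..N}. okst (s m) y z}. card (S y))"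
      by (rule card_UN_disjoint) (auto simp: S_def finite_W intro: finite_subset[of _ "{1..N}"])
    ultimately have "card {v \<in> W N m. chn N s m v \<and> okst (s m) (vv N v m) z}
        = (\<Sum>y\<in>{y\<in>{1..N}. okst (s m) y z}. card (S y))" by simp
    then have "int (card {v \<in> W N (Suc m). chn N s (Suc m) v \<and> vv N v (Suc m) = z})
        = (\<Sum>y\<in>{y\<in>{1..N}. okst (s m) y z}. vecl N (e0 N) (map s [0..<m]) y)"
      using cnt_step[OF True] Suc.IH by (simp add: S_def)
    also have "\<dots> = (\<Sum>y\<in>{1..N}. if okst (s m) y z then vecl N (e0 N) (map s [0..<m]) y else 0)"
      by (rule sum.inter_filter) simp
    also have "\<dots> = stepv N (s m) (vecl N (e0 N) (map s [0..<m])) z"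
      using True by (simp add: stepv_def)
    finally show ?thesis by (simp add: map vecl_snoc)
  qed
qed

lemma card_chain:
  assumes N: "N \<ge> 1"
  shows "int (card {v \<in> W N m. chn N s m v}) = Fs N (e0 N) (map s [0..<m])"
proof -
  define S where "S = (\<lambda>z. {v \<in> W N m. chn N s m v \<and> vv N v m = z})"
  have "{v \<in> W N m. chn N s m v} = (\<Union>z\<in>{1..N}. S z)"
    unfolding S_def using vv_range[OF _ N, of _ m m] by auto
  moreover have "card (\<Union>z\<in>{1..N}. S z) = (\<Sum>z\<in>{1..N}. card (S z))"
    by (rule card_UN_disjoint) (auto simp: S_def finite_W)
  ultimately have "card {v \<in> W N m. chn N s m v} = (\<Sum>z\<in>{1..N}. card (S z))" by simp
  then show ?thesis using cnt_vec[OF N] by (simp add: Fs_def S_def)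
qed

definition ss :: "(int \<Rightarrow> int) \<Rightarrow> nat \<Rightarrow> bool" where
  "ss \<sigma> j = (\<sigma> (int j) < \<sigma> (int j + 1))"

definition phi :: "nat \<Rightarrow> int \<Rightarrow> (int \<Rightarrow> int) \<Rightarrow> (int \<Rightarrow> int) \<Rightarrow> int \<Rightarrow> int" where
  "phi n N \<sigma> u = (\<lambda>j. if j \<in> {1..int n} then ext N u (\<sigma> j) else undefined)"

lemma kl_okst: "i \<noteq> j \<Longrightarrow> kl N u i j \<longleftrightarrow> okst (i < j) (ext N u i) (ext N u j)"
  unfolding kl_def okst_def by (cases "odd (ext N u i)") auto

lemma sorts_local:
  assumes s: "\<sigma> \<in> signed_perms n" and N: "odd N"
  shows "sorts n N u \<sigma> \<longleftrightarrow> (\<forall>j<n. kl N u (\<sigma> (int j)) (\<sigma> (int j + 1)))"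
proof
  assume "sorts n N u \<sigma>" then show "\<forall>j<n. kl N u (\<sigma> (int j)) (\<sigma> (int j + 1))"
    unfolding sorts_def by auto
next
  assume loc: "\<forall>j<n. kl N u (\<sigma> (int j)) (\<sigma> (int j + 1))"
  have loc2: "kl N u (\<sigma> a) (\<sigma> (a + 1))" if a: "a \<in> PP n" "a + 1 \<in> PP n" for a
  proof (cases "0 \<le> a")
    case True
    then obtain j where j: "a = int j" by (metis nonneg_int_cases)
    then have "j < n" using a by auto
    then show ?thesis using loc j by auto
  next
    case False
    define k where "k = nat (- a - 1)"
    have ak: "a = - int (Suc k)" "a + 1 = - int k" using False unfolding k_def by auto
    have "k < n" using a ak by auto
    then have "kl N u (\<sigma> (int k)) (\<sigma> (int k + 1))" using loc by auto
    then have "kl N u (- \<sigma> (int k + 1)) (- \<sigma> (int k))" using kl_neg[OF N] by simp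
    then show ?thesis using ak sp_odd[OF s] by (metis of_nat_Suc add.commute)
  qed
  have step: "\<forall>a. a \<in> PP n \<longrightarrow> a + int (Suc d) \<in> PP n \<longrightarrow> kl N u (\<sigma> a) (\<sigma> (a + int (Suc d)))" for d
  proof (induction d)
    case 0 then show ?case using loc2 by simp
  next
    case (Suc d)
    show ?case
    proof (intro allI impI)
      fix a assume a: "a \<in> PP n" "a + int (Suc (Suc d)) \<in> PP n"
      have "kl N u (\<sigma> a) (\<sigma> (a + int (Suc d)))" using Suc a by auto
      moreover have "kl N u (\<sigma> (a + int (Suc d))) (\<sigma> (a + int (Suc d) + 1))"
        by (rule loc2) (use a in auto)
      moreover have "a + int (Suc (Suc d)) = a + int (Suc d) + 1" by simp
      ultimately show "kl N u (\<sigma> a) (\<sigma> (a + int (Suc (Suc d))))" using kl_trans by metis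
    qed
  qed
  show "sorts n N u \<sigma>" unfolding sorts_def
  proof (intro ballI impI)
    fix a b assume ab: "a \<in> PP n" "b \<in> PP n" "a < b"
    define d where "d = nat (b - a - 1)"
    have "b = a + int (Suc d)" using ab unfolding d_def by auto
    then show "kl N u (\<sigma> a) (\<sigma> b)" using step[of d] ab by auto
  qed
qed

lemma vv_phi: "\<sigma> \<in> signed_perms n \<Longrightarrow> j \<le> n \<Longrightarrow> vv N (phi n N \<sigma> u) j = ext N u (\<sigma> (int j))"
  unfolding vv_def phi_def using sp_zero[of \<sigma> n] by (auto simp: ext_def)

lemma sorts_chn:
  assumes s: "\<sigma> \<in> signed_perms n" and N: "odd N"
  shows "sorts n N u \<sigma> \<longleftrightarrow> chn N (ss \<sigma>) n (phi n N \<sigma> u)"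
proof -
  have "kl N u (\<sigma> (int j)) (\<sigma> (int j + 1)) \<longleftrightarrow>
        okst (ss \<sigma> j) (vv N (phi n N \<sigma> u) j) (vv N (phi n N \<sigma> u) (Suc j))" if j: "j < n" for j
  proof -
    have "\<sigma> (int j) \<noteq> \<sigma> (int j + 1)"
      using inj_onD[OF sp_inj[OF s], of "int j" "int j + 1"] j by auto
    then show ?thesis using vv_phi[OF s, of j N u] vv_phi[OF s, of "Suc j" N u] j
      by (simp add: kl_okst ss_def add.commute)
  qed
  then show ?thesis unfolding sorts_local[OF s N] chn_def by auto
qed

lemma phi_W:
  assumes s: "\<sigma> \<in> signed_perms n" and N: "N \<ge> 1" and u: "u \<in> W N n"
  shows "phi n N \<sigma> u \<in> W N n"
proof -
  have "ext N u (\<sigma> j) \<in> {1..N}" if "j \<in> {1..int n}" for j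
    using ext_range[OF u N sp_in[OF s]] that by auto
  then show ?thesis unfolding W_def phi_def by auto
qed

lemma phi_inj:
  assumes s: "\<sigma> \<in> signed_perms n" and N: "odd N"
  shows "inj_on (phi n N \<sigma>) (W N n)"
proof (rule inj_onI)
  fix u u' assume u: "u \<in> W N n" and u': "u' \<in> W N n" and eq: "phi n N \<sigma> u = phi n N \<sigma> u'"
  have e: "ext N u (\<sigma> j) = ext N u' (\<sigma> j)" if "j \<in> {1..int n}" for j
    using fun_cong[OF eq, of j] that by (simp add: phi_def)
  show "u = u'"
  proof (rule W_eqI[OF u u'])
    fix i assume i: "i \<in> {1..int n}"
    then obtain j where j: "j \<in> PP n" "\<sigma> j = i" using sp_surj[OF s, of i] by auto
    have "j \<noteq> 0" using j i sp_zero[OF s] by auto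
    then consider "0 < j" | "j < 0" by linarith
    then show "u i = u' i"
    proof cases
      case 1 then show ?thesis using e[of j] j i by (auto simp: ext_def)
    next
      case 2
      have "\<sigma> (- j) = - i" using sp_odd[OF s] j by simp
      then show ?thesis using e[of "- j"] j i 2 by (auto simp: ext_def)
    qed
  qed
qed

lemma count_sorts:
  assumes s: "\<sigma> \<in> signed_perms n" and N: "odd N" "N \<ge> 1"
  shows "card {u \<in> W N n. sorts n N u \<sigma>} = card {v \<in> W N n. chn N (ss \<sigma>) n v}"
proof -
  have img: "phi n N \<sigma> ` W N n = W N n"
  proof (rule card_seteq)
    show "finite (W N n)" by (rule finite_W)
    show "phi n N \<sigma> ` W N n \<subseteq> W N n" using phi_W[OF s N(2)] by auto
    show "card (W N n) \<le> card (phi n N \<sigma> ` W N n)" using card_image[OF phi_inj[OF s N(1)]] by simp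
  qed
  have "{v \<in> W N n. chn N (ss \<sigma>) n v} = phi n N \<sigma> ` {u \<in> W N n. sorts n N u \<sigma>}"
  proof
    show "phi n N \<sigma> ` {u \<in> W N n. sorts n N u \<sigma>} \<subseteq> {v \<in> W N n. chn N (ss \<sigma>) n v}"
      using phi_W[OF s N(2)] sorts_chn[OF s N(1)] by auto
    show "{v \<in> W N n. chn N (ss \<sigma>) n v} \<subseteq> phi n N \<sigma> ` {u \<in> W N n. sorts n N u \<sigma>}"
    proof
      fix v assume v: "v \<in> {v \<in> W N n. chn N (ss \<sigma>) n v}"
      then obtain u where u: "u \<in> W N n" "v = phi n N \<sigma> u" using img by (metis (no_types, lifting) imageE mem_Collect_eq)
      then show "v \<in> phi n N \<sigma> ` {u \<in> W N n. sorts n N u \<sigma>}" using v sorts_chn[OF s N(1)] by auto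
    qed
  qed
  moreover have "inj_on (phi n N \<sigma>) {u \<in> W N n. sorts n N u \<sigma>}"
    by (rule inj_on_subset[OF phi_inj[OF s N(1)]]) auto
  ultimately show ?thesis by (simp add: card_image)
qed

lemma rho_Fs:
  assumes s: "\<sigma> \<in> signed_perms n" and N: "odd N" "N \<ge> 1"
  shows "rho n N \<sigma> = of_int (Fs N (e0 N) (map (ss \<sigma>) [0..<n]))"
proof -
  have "{u \<in> W N n. st n N u = \<sigma>} = {u \<in> W N n. sorts n N u \<sigma>}"
    using sorts_iff_st[OF s N(1)] by auto
  then have "rho n N \<sigma> = of_nat (card {v \<in> W N n. chn N (ss \<sigma>) n v})"
    using s count_sorts[OF s N] by (simp add: rho_def)
  also have "\<dots> = of_int (int (card {v \<in> W N n. chn N (ss \<sigma>) n v}))" by simp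
  also have "\<dots> = of_int (Fs N (e0 N) (map (ss \<sigma>) [0..<n]))" using card_chain[OF N(2)] by simp
  finally show ?thesis .
qed

lemma pkl_map: "pkl (map s [0..<m]) = card {i \<in> {1..<m}. s (i - 1) \<and> \<not> s i}"
proof (induction m)
  case 0 then show ?case by simp
next
  case (Suc m)
  define S where "S = {i \<in> {1..<m}. s (i - 1) \<and> \<not> s i}"
  have map: "map s [0..<Suc m] = map s [0..<m] @ [s m]" by simp
  have ps: "pkl (map s [0..<Suc m]) = pkl (map s [0..<m]) + (if m \<ge> 1 \<and> s (m - 1) \<and> \<not> s m then 1 else 0)"
  proof (cases "m = 0")
    case True then show ?thesis by simp
  next
    case False
    then have "last (map s [0..<m]) = s (m - 1)" by (simp add: last_map)
    then show ?thesis unfolding map pkl_snoc using False by simp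
  qed
  have set: "{i \<in> {1..<Suc m}. s (i - 1) \<and> \<not> s i} = S \<union> (if m \<ge> 1 \<and> s (m - 1) \<and> \<not> s m then {m} else {})"
    unfolding S_def by (auto simp: less_Suc_eq)
  have fin: "finite S" "m \<notin> S" unfolding S_def by auto
  show ?case
  proof (cases "m \<ge> 1 \<and> s (m - 1) \<and> \<not> s m")
    case True
    then have e: "(if m \<ge> 1 \<and> s (m - 1) \<and> \<not> s m then {m} else {}) = {m}" by simp
    have "card {i \<in> {1..<Suc m}. s (i - 1) \<and> \<not> s i} = card S + 1" unfolding set e using fin by simp
    then show ?thesis using ps Suc.IH True by (simp add: S_def)
  next
    case False
    then have e: "(if m \<ge> 1 \<and> s (m - 1) \<and> \<not> s m then {m} else {}) = {}" by (simp only: if_False simp_thms)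
    have "card {i \<in> {1..<Suc m}. s (i - 1) \<and> \<not> s i} = card S" unfolding set e by simp
    then show ?thesis using ps Suc.IH False by (simp add: S_def)
  qed
qed

lemma peB_pkl:
  assumes s: "\<sigma> \<in> signed_perms n"
  shows "peB n \<sigma> = pkl (map (ss \<sigma>) [0..<n])"
proof -
  have "{i \<in> {1..int n - 1}. \<sigma> (i - 1) < \<sigma> i \<and> \<sigma> i > \<sigma> (i + 1)}
      = int ` {i \<in> {1..<n}. ss \<sigma> (i - 1) \<and> \<not> ss \<sigma> i}"
  proof
    show "{i \<in> {1..int n - 1}. \<sigma> (i - 1) < \<sigma> i \<and> \<sigma> i > \<sigma> (i + 1)}
        \<subseteq> int ` {i \<in> {1..<n}. ss \<sigma> (i - 1) \<and> \<not> ss \<sigma> i}"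
    proof
      fix i assume i: "i \<in> {i \<in> {1..int n - 1}. \<sigma> (i - 1) < \<sigma> i \<and> \<sigma> i > \<sigma> (i + 1)}"
      define k where "k = nat i"
      have ik: "i = int k" "1 \<le> k" "k < n" using i unfolding k_def by auto
      have "int (k - 1) = i - 1" using ik by auto
      then have "ss \<sigma> (k - 1) \<and> \<not> ss \<sigma> k" using i ik by (auto simp: ss_def)
      then show "i \<in> int ` {i \<in> {1..<n}. ss \<sigma> (i - 1) \<and> \<not> ss \<sigma> i}" using ik by auto
    qed
  next
    show "int ` {i \<in> {1..<n}. ss \<sigma> (i - 1) \<and> \<not> ss \<sigma> i}
        \<subseteq> {i \<in> {1..int n - 1}. \<sigma> (i - 1) < \<sigma> i \<and> \<sigma> i > \<sigma> (i + 1)}"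
    proof
      fix i assume "i \<in> int ` {i \<in> {1..<n}. ss \<sigma> (i - 1) \<and> \<not> ss \<sigma> i}"
      then obtain k where k: "i = int k" "1 \<le> k" "k < n" "ss \<sigma> (k - 1)" "\<not> ss \<sigma> k" by auto
      have "int (k - 1) = i - 1" using k by auto
      moreover have "\<sigma> (int k) \<noteq> \<sigma> (int k + 1)"
        using inj_onD[OF sp_inj[OF s], of "int k" "int k + 1"] k by auto
      ultimately show "i \<in> {i \<in> {1..int n - 1}. \<sigma> (i - 1) < \<sigma> i \<and> \<sigma> i > \<sigma> (i + 1)}"
        using k by (auto simp: ss_def)
    qed
  qed
  then have "peB n \<sigma> = card (int ` {i \<in> {1..<n}. ss \<sigma> (i - 1) \<and> \<not> ss \<sigma> i})"
    by (simp add: peB_def)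
  also have "\<dots> = card {i \<in> {1..<n}. ss \<sigma> (i - 1) \<and> \<not> ss \<sigma> i}" by (simp add: card_image)
  finally show ?thesis by (simp add: pkl_map)
qed

definition idx :: "nat \<Rightarrow> (int \<Rightarrow> int) \<Rightarrow> nat" where
  "idx n \<sigma> = 2 * peB n \<sigma> + (if 0 < \<sigma> 1 then 0 else 1)"

lemma word_props:
  assumes s: "\<sigma> \<in> signed_perms n" and n: "n \<ge> 1"
  shows "map (ss \<sigma>) [0..<n] \<noteq> []" "length (map (ss \<sigma>) [0..<n]) = n"
    "hd (map (ss \<sigma>) [0..<n]) = (0 < \<sigma> 1)"
  using n sp_zero[OF s] by (auto simp: ss_def hd_map)

lemma idx_le:
  assumes s: "\<sigma> \<in> signed_perms n" and n: "n \<ge> 1"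
  shows "idx n \<sigma> \<le> n"
  using len_bound[OF word_props(1)[OF s n]] word_props[OF s n] peB_pkl[OF s]
  unfolding idx_def by (auto split: if_splits)

lemma rho_class:
  assumes s: "\<sigma> \<in> signed_perms n" and N: "odd N" "N \<ge> 1" and n: "n \<ge> 1"
  shows "rho n N \<sigma> = of_int (Fs N (e0 N) (cw n (idx n \<sigma>)))"
proof -
  have t: "idx n \<sigma> \<le> n" by (rule idx_le[OF s n])
  have "Fs N (e0 N) (map (ss \<sigma>) [0..<n]) = Fs N (e0 N) (cw n (idx n \<sigma>))"
  proof (rule Fs_class[OF N(1) cw_props(1)[OF t n]])
    show "length (map (ss \<sigma>) [0..<n]) = length (cw n (idx n \<sigma>))"
      using cw_props(2)[OF t n] by simp
    show "hd (map (ss \<sigma>) [0..<n]) = hd (cw n (idx n \<sigma>))"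
      using cw_props(3)[OF t n] word_props(3)[OF s n] by (simp add: idx_def)
    show "pkl (map (ss \<sigma>) [0..<n]) = pkl (cw n (idx n \<sigma>))"
      using cw_props(4)[OF t n] peB_pkl[OF s] by (simp add: idx_def)
  qed
  then show ?thesis using rho_Fs[OF s N] by simp
qed

definition Ecl :: "nat \<Rightarrow> nat \<Rightarrow> (int \<Rightarrow> int) \<Rightarrow> rat" where
  "Ecl n t = (\<lambda>\<sigma>. if \<sigma> \<in> signed_perms n \<and> idx n \<sigma> = t then 1 else 0)"

definition coef :: "nat \<Rightarrow> int \<Rightarrow> nat \<Rightarrow> rat" where
  "coef n N t = of_int (Fs N (e0 N) (cw n t))"

lemma sum_fun_app: "(sum f A) x = sum (\<lambda>a. f a x) A"
  by (induction A rule: infinite_finite_induct) auto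

lemma rho_expand:
  assumes N: "odd N" "N \<ge> 1" and n: "n \<ge> 1"
  shows "rho n N = (\<Sum>t\<in>{..n}. qscale (coef n N t) (Ecl n t))"
proof
  fix \<sigma>
  show "rho n N \<sigma> = (\<Sum>t\<in>{..n}. qscale (coef n N t) (Ecl n t)) \<sigma>"
  proof (cases "\<sigma> \<in> signed_perms n")
    case True
    have "(\<Sum>t\<in>{..n}. qscale (coef n N t) (Ecl n t)) \<sigma> = (\<Sum>t\<in>{..n}. if t = idx n \<sigma> then coef n N t else 0)"
      unfolding sum_fun_app by (rule sum.cong) (auto simp: qscale_def Ecl_def True)
    also have "\<dots> = coef n N (idx n \<sigma>)" using idx_le[OF True n] by simp
    finally show ?thesis using rho_class[OF True N n] by (simp add: coef_def)
  next
    case False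
    then show ?thesis unfolding sum_fun_app by (simp add: rho_def qscale_def Ecl_def)
  qed
qed

lemma sp_one_nz: "\<sigma> \<in> signed_perms n \<Longrightarrow> n \<ge> 1 \<Longrightarrow> \<sigma> 1 \<noteq> 0"
  using sp_nz[of \<sigma> n 1] by auto

lemma par1: "(2 * a + 1 :: nat) \<noteq> 2 * i" by presburger

lemma Eplus_Ecl: "Eplus n i = Ecl n (2 * i)"
proof
  fix \<sigma>
  have "(2 * peB n \<sigma> + (if 0 < \<sigma> 1 then 0 else 1) = 2 * i) \<longleftrightarrow> (peB n \<sigma> = i \<and> 0 < \<sigma> 1)"
    using par1[of "peB n \<sigma>" i] by (cases "0 < \<sigma> 1") auto
  then show "Eplus n i \<sigma> = Ecl n (2 * i) \<sigma>" unfolding Eplus_def Ecl_def idx_def by auto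
qed

lemma Eminus_Ecl: "n \<ge> 1 \<Longrightarrow> Eminus n i = Ecl n (2 * i + 1)"
proof
  fix \<sigma> assume n: "n \<ge> 1"
  show "Eminus n i \<sigma> = Ecl n (2 * i + 1) \<sigma>"
  proof (cases "\<sigma> \<in> signed_perms n")
    case True
    have "\<sigma> 1 \<noteq> 0" using sp_one_nz[OF True n] .
    then have "(2 * peB n \<sigma> + (if 0 < \<sigma> 1 then 0 else 1) = 2 * i + 1) \<longleftrightarrow> (peB n \<sigma> = i \<and> \<sigma> 1 < 0)"
      using par1[of i "peB n \<sigma>"] by (cases "0 < \<sigma> 1") auto
    then show ?thesis unfolding Eminus_def Ecl_def idx_def by auto
  next
    case False then show ?thesis unfolding Eminus_def Ecl_def by auto
  qed
qed

lemma Ecl_big: "n \<ge> 1 \<Longrightarrow> t > n \<Longrightarrow> Ecl n t = 0"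
  unfolding Ecl_def using idx_le[of _ n] by (force simp: fun_eq_iff)

lemma gens_eq:
  assumes n: "n \<ge> 1"
  shows "peak_algebra_B n = qv.span (Ecl n ` {..n})"
proof -
  let ?G = "{Eplus n i | i. i \<le> n div 2} \<union> {Eminus n i | i. i \<le> n div 2}"
  have 1: "?G \<subseteq> insert 0 (Ecl n ` {..n})"
  proof
    fix x assume "x \<in> ?G"
    then consider i where "i \<le> n div 2" "x = Eplus n i" | i where "i \<le> n div 2" "x = Eminus n i" by blast
    then show "x \<in> insert 0 (Ecl n ` {..n})"
    proof cases
      case 1 then show ?thesis by (auto simp: Eplus_Ecl)
    next
      case 2
      show ?thesis
      proof (cases "2 * i + 1 \<le> n")
        case True then show ?thesis using 2 n by (auto simp: Eminus_Ecl)
      next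
        case False then show ?thesis using 2 n Ecl_big[OF n, of "2*i+1"] by (auto simp: Eminus_Ecl)
      qed
    qed
  qed
  have 2: "Ecl n ` {..n} \<subseteq> ?G"
  proof
    fix x assume "x \<in> Ecl n ` {..n}"
    then obtain t where t: "t \<le> n" "x = Ecl n t" by auto
    show "x \<in> ?G"
    proof (cases "even t")
      case True
      then have "x = Eplus n (t div 2)" using t by (simp add: Eplus_Ecl)
      moreover have "t div 2 \<le> n div 2" using t by (simp add: div_le_mono)
      ultimately show ?thesis by blast
    next
      case False
      then have "x = Eminus n (t div 2)" using t n by (simp add: Eminus_Ecl)
      moreover have "t div 2 \<le> n div 2" using t by (simp add: div_le_mono)
      ultimately show ?thesis by blast
    qed
  qed
  have "qv.span ?G \<subseteq> qv.span (Ecl n ` {..n})"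
    using qv.span_mono[OF 1] by simp
  moreover have "qv.span (Ecl n ` {..n}) \<subseteq> qv.span ?G" using qv.span_mono[OF 2] .
  ultimately show ?thesis unfolding peak_algebra_B_def by blast
qed

definition RR :: "nat \<Rightarrow> ((int \<Rightarrow> int) \<Rightarrow> rat) set" where
  "RR n = {rho n N | N. odd N \<and> N \<ge> 1}"

lemma rho_in_S:
  assumes N: "odd N" "N \<ge> 1" and n: "n \<ge> 1"
  shows "rho n N \<in> qv.span (Ecl n ` {..n})"
  unfolding rho_expand[OF N n]
  by (intro qv.span_sum qv.span_scale qv.span_base) auto

lemma coef_vanish:
  assumes "t < s" "s \<le> n" "n \<ge> 1"
  shows "coef n (2 * int t + 1) s = 0"
proof -
  have "Fs (2 * int t + 1) (e0 (2 * int t + 1)) (cw n s) = 0"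
  proof (rule vanish)
    show "cw n s \<noteq> []" using cw_props(1)[of s n] assms by simp
    show "int t \<ge> 0" by simp
    have "2 * pkl (cw n s) + (if hd (cw n s) then 0 else 1) = s"
      using cw_props(3,4)[of s n] assms by auto
    then show "int (2 * pkl (cw n s) + (if hd (cw n s) then 0 else 1)) > int t" using assms by simp
  qed
  then show ?thesis by (simp add: coef_def)
qed

lemma coef_pos: "t \<le> n \<Longrightarrow> coef n (2 * int t + 1) t \<noteq> 0"
  using positive[of t n] by (simp add: coef_def)

lemma qscale_zero: "qscale 0 x = 0"
  by (simp add: qscale_def fun_eq_iff)

lemma Ecl_in_R:
  assumes n: "n \<ge> 1"
  shows "t \<le> n \<Longrightarrow> Ecl n t \<in> qv.span (RR n)"
proof (induction t rule: less_induct)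
  case (less t)
  define N where "N = 2 * int t + 1"
  have N: "odd N" "N \<ge> 1" unfolding N_def by auto
  define c where "c = coef n N t"
  have c: "c \<noteq> 0" unfolding c_def N_def using coef_pos[OF less.prems] .
  define rest where "rest = (\<Sum>s\<in>{..n} - {t}. qscale (coef n N s) (Ecl n s))"
  have exp: "rho n N = qscale c (Ecl n t) + rest"
    unfolding rho_expand[OF N n] rest_def c_def
    using less.prems by (simp add: sum.remove[of "{..n}" t])
  have rest_in: "rest \<in> qv.span (RR n)"
    unfolding rest_def
  proof (rule qv.span_sum)
    fix s assume s: "s \<in> {..n} - {t}"
    show "qscale (coef n N s) (Ecl n s) \<in> qv.span (RR n)"
    proof (cases "s < t")
      case True then show ?thesis using less.IH[of s] less.prems by (intro qv.span_scale) auto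
    next
      case False
      then have "coef n N s = 0" unfolding N_def using s n by (intro coef_vanish) auto
      then show ?thesis by (simp add: qscale_zero qv.span_zero)
    qed
  qed
  have rho_in: "rho n N \<in> qv.span (RR n)" using N by (intro qv.span_base) (auto simp: RR_def)
  have "Ecl n t = qscale (inverse c) (rho n N - rest)"
    unfolding exp using c by (simp add: qscale_def fun_eq_iff)
  also have "\<dots> \<in> qv.span (RR n)" using rho_in rest_in by (intro qv.span_scale qv.span_diff)
  finally show ?case .
qed

lemma S_eq_R:
  assumes n: "n \<ge> 1"
  shows "qv.span (Ecl n ` {..n}) = qv.span (RR n)"
proof
  show "qv.span (Ecl n ` {..n}) \<subseteq> qv.span (RR n)"
    using Ecl_in_R[OF n] by (intro qv.span_minimal) auto
  show "qv.span (RR n) \<subseteq> qv.span (Ecl n ` {..n})"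
    using rho_in_S[OF _ _ n] by (intro qv.span_minimal) (auto simp: RR_def)
qed

lemma gmult_add1: "gmult n (a + a') b = gmult n a b + gmult n a' b"
  by (simp add: gmult_def fun_eq_iff sum.distrib[symmetric] case_prod_beta algebra_simps)
lemma gmult_add2: "gmult n a (b + b') = gmult n a b + gmult n a b'"
  by (simp add: gmult_def fun_eq_iff sum.distrib[symmetric] case_prod_beta algebra_simps)
lemma gmult_scale1: "gmult n (qscale c a) b = qscale c (gmult n a b)"
  by (simp add: gmult_def qscale_def fun_eq_iff sum_distrib_left case_prod_beta algebra_simps)
lemma gmult_scale2: "gmult n a (qscale c b) = qscale c (gmult n a b)"
  by (simp add: gmult_def qscale_def fun_eq_iff sum_distrib_left case_prod_beta algebra_simps)
lemma gmult_zero1: "gmult n 0 b = 0"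
  by (simp add: gmult_def fun_eq_iff)
lemma gmult_zero2: "gmult n a 0 = 0"
  by (simp add: gmult_def fun_eq_iff)

lemma RR_mult:
  assumes "r \<in> RR n" "r' \<in> RR n"
  shows "gmult n r r' \<in> RR n \<and> gmult n r r' = gmult n r' r"
proof -
  obtain N M where NM: "r = rho n N" "odd N" "N \<ge> 1" "r' = rho n M" "odd M" "M \<ge> 1"
    using assms by (auto simp: RR_def)
  have 1: "gmult n r r' = rho n (N*M)" using gmult_rho NM by simp
  have 2: "gmult n r' r = rho n (M*N)" using gmult_rho NM by simp
  have "(1::int) * 1 \<le> N * M" by (rule mult_mono) (use NM in auto)
  then have "odd (N*M)" "N*M \<ge> 1" using NM by auto
  then show ?thesis using 1 2 by (auto simp: RR_def mult.commute)
qed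

lemma span_mult:
  assumes a: "a \<in> qv.span (RR n)" and b: "b \<in> qv.span (RR n)"
  shows "gmult n a b \<in> qv.span (RR n) \<and> gmult n a b = gmult n b a"
proof -
  have step1: "gmult n a r \<in> qv.span (RR n) \<and> gmult n a r = gmult n r a"
    if a: "a \<in> qv.span (RR n)" and r: "r \<in> RR n" for a r
  proof -
    let ?Q = "{a. gmult n a r \<in> qv.span (RR n) \<and> gmult n a r = gmult n r a}"
    have "qv.subspace ?Q"
      unfolding qv.subspace_def
      by (auto simp: gmult_add1 gmult_add2 gmult_scale1 gmult_scale2 gmult_zero1 gmult_zero2
          qv.span_zero qv.span_add qv.span_scale)
    moreover have "RR n \<subseteq> ?Q" using RR_mult[OF _ r] qv.span_base by blast
    ultimately have "a \<in> ?Q" using qv.span_subspace_induct[OF a] by blast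
    then show ?thesis by blast
  qed
  let ?Q = "{b. gmult n a b \<in> qv.span (RR n) \<and> gmult n a b = gmult n b a}"
  have "qv.subspace ?Q"
    unfolding qv.subspace_def
    by (auto simp: gmult_add1 gmult_add2 gmult_scale1 gmult_scale2 gmult_zero1 gmult_zero2
        qv.span_zero qv.span_add qv.span_scale)
  moreover have "RR n \<subseteq> ?Q" using step1[OF a] by blast
  ultimately have "b \<in> ?Q" using qv.span_subspace_induct[OF b] by blast
  then show ?thesis by blast
qed

definition rf :: "nat \<Rightarrow> nat \<Rightarrow> int \<Rightarrow> int" where
  "rf n t i = (if i \<le> int n - 2 * int (t div 2) then (if even t then i else - i)
               else (if even (i - (int n - 2 * int (t div 2))) then i - 1 else i + 1))"

definition rep :: "nat \<Rightarrow> nat \<Rightarrow> int \<Rightarrow> int" where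
  "rep n t = (\<lambda>i. if i \<in> PP n then (if 0 < i then rf n t i else if i < 0 then - rf n t (- i) else 0) else i)"

lemma rf_cases:
  assumes t: "t \<le> n" and i: "1 \<le> i" "i \<le> int n"
  defines "K \<equiv> int n - 2 * int (t div 2)"
  shows "(i \<le> K \<and> even t \<and> rf n t i = i) \<or> (i \<le> K \<and> odd t \<and> rf n t i = - i)
    \<or> (K < i \<and> even (i - K) \<and> K + 2 \<le> i \<and> rf n t i = i - 1)
    \<or> (K < i \<and> odd (i - K) \<and> i + 1 \<le> int n \<and> rf n t i = i + 1)"
proof -
  have K0: "K \<ge> 0" using t unfolding K_def by linarith
  have Kn: "even (int n - K)" unfolding K_def by simp
  show ?thesis
  proof (cases "i \<le> K")
    case True then show ?thesis by (cases "even t") (auto simp: rf_def K_def)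
  next
    case False
    show ?thesis
    proof (cases "even (i - K)")
      case True
      then have "K + 2 \<le> i" using False by presburger
      then show ?thesis using False True by (simp add: rf_def K_def)
    next
      case odd: False
      have "i \<noteq> int n" using odd Kn by auto
      then have "i + 1 \<le> int n" using i by simp
      then show ?thesis using False odd by (simp add: rf_def K_def)
    qed
  qed
qed

lemma rf_range:
  assumes t: "t \<le> n" and i: "1 \<le> i" "i \<le> int n"
  shows "rf n t i \<in> PP n" "rf n t i \<noteq> 0"
proof -
  have "2 * (t div 2) \<le> n" using t by presburger
  then have "int n - 2 * int (t div 2) \<ge> 0" by linarith
  then show "rf n t i \<in> PP n" "rf n t i \<noteq> 0" using rf_cases[OF t i] i by auto
qed

lemma rep_pos: "1 \<le> i \<Longrightarrow> i \<le> int n \<Longrightarrow> rep n t i = rf n t i"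
  by (simp add: rep_def)

lemma rep_neg: "1 \<le> i \<Longrightarrow> i \<le> int n \<Longrightarrow> rep n t (- i) = - rf n t i"
  by (simp add: rep_def)

lemma rep_odd: "rep n t (- i) = - rep n t i"
  unfolding rep_def by auto

lemma rep_invol:
  assumes t: "t \<le> n" and i: "i \<in> PP n"
  shows "rep n t (rep n t i) = i"
proof -
  have pos: "rep n t (rep n t i) = i" if i1: "1 \<le> i" "i \<le> int n" for i
  proof -
    define K where "K = int n - 2 * int (t div 2)"
    from rf_cases[OF t i1] consider
      "i \<le> K" "even t" "rf n t i = i" | "i \<le> K" "odd t" "rf n t i = - i"
      | "K < i" "even (i - K)" "K + 2 \<le> i" "rf n t i = i - 1"
      | "K < i" "odd (i - K)" "i + 1 \<le> int n" "rf n t i = i + 1"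
      unfolding K_def by blast
    then show ?thesis
    proof cases
      case 1 then show ?thesis using i1 by (simp add: rep_pos)
    next
      case 2 then show ?thesis using i1 rep_neg[OF i1, of t] by (simp add: rep_pos)
    next
      case 3
      have a: "rep n t i = i - 1" using 3 i1 by (simp add: rep_pos)
      have "1 \<le> i - 1" "i - 1 \<le> int n" using 3 i1 t unfolding K_def by auto
      moreover have "rf n t (i - 1) = i"
        using 3 unfolding rf_def K_def[symmetric] by (auto simp: algebra_simps)
      ultimately show ?thesis using a by (simp add: rep_pos)
    next
      case 4
      have a: "rep n t i = i + 1" using 4 i1 by (simp add: rep_pos)
      have "1 \<le> i + 1" "i + 1 \<le> int n" using 4 i1 by auto
      moreover have "rf n t (i + 1) = i"
        using 4 unfolding rf_def K_def[symmetric] by (auto simp: algebra_simps)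
      ultimately show ?thesis using a by (simp add: rep_pos)
    qed
  qed
  consider "0 < i" | "i < 0" | "i = 0" by linarith
  then show ?thesis
  proof cases
    case 1 then show ?thesis using pos i by auto
  next
    case 2
    have "rep n t (rep n t (- i)) = - i" using pos[of "- i"] 2 i by auto
    then show ?thesis using rep_odd by (metis minus_minus)
  next
    case 3 then show ?thesis by (simp add: rep_def)
  qed
qed

lemma rep_in:
  assumes t: "t \<le> n" and i: "i \<in> PP n"
  shows "rep n t i \<in> PP n"
proof -
  consider "0 < i" | "i < 0" | "i = 0" by linarith
  then show ?thesis
  proof cases
    case 1
    then have "1 \<le> i" "i \<le> int n" using i by auto
    then show ?thesis using rf_range(1)[OF t] rep_pos by metis
  next
    case 2
    then have m: "1 \<le> - i" "- i \<le> int n" using i by auto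
    have "rep n t i = - rf n t (- i)" using rep_neg[OF m, of t] by simp
    moreover have "rf n t (- i) \<in> PP n" using rf_range(1)[OF t m] .
    ultimately show ?thesis by auto
  next
    case 3 then show ?thesis by (simp add: rep_def)
  qed
qed

lemma rep_sp:
  assumes t: "t \<le> n"
  shows "rep n t \<in> signed_perms n"
proof -
  have "bij_betw (rep n t) (PP n) (PP n)"
  proof (rule bij_betw_byWitness[where f'="rep n t"])
    show "\<forall>a\<in>PP n. rep n t (rep n t a) = a" using rep_invol[OF t] by blast
    show "\<forall>a\<in>PP n. rep n t (rep n t a) = a" using rep_invol[OF t] by blast
    show "rep n t ` PP n \<subseteq> PP n" using rep_in[OF t] by blast
    show "rep n t ` PP n \<subseteq> PP n" using rep_in[OF t] by blast
  qed
  moreover have "\<forall>i. rep n t (- i) = - rep n t i" using rep_odd by blast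
  moreover have "\<forall>i. \<bar>i\<bar> > int n \<longrightarrow> rep n t i = i" unfolding rep_def by auto
  ultimately show ?thesis unfolding signed_perms_def by blast
qed

lemma ud_nth: "m < 2 * p \<Longrightarrow> ud p ! m = even m"
proof (induction p arbitrary: m)
  case 0 then show ?case by simp
next
  case (Suc p)
  show ?case
  proof (cases m)
    case 0 then show ?thesis by (simp add: ud_Suc)
  next
    case (Suc m')
    show ?thesis
    proof (cases m')
      case 0 then show ?thesis using Suc by (simp add: ud_Suc)
    next
      case (Suc m'')
      then have "m = Suc (Suc m'')" "m'' < 2 * p" using \<open>m = Suc m'\<close> Suc.prems by auto
      then show ?thesis using Suc.IH[of m''] by (simp add: ud_Suc)
    qed
  qed
qed

lemma cw_nth:
  assumes "j < n" "t \<le> n"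
  shows "cw n t ! j = (if j < n - 2 * (t div 2) then even t else even (j - (n - 2 * (t div 2))))"
proof -
  have "2 * (t div 2) \<le> n" using assms by presburger
  then show ?thesis using assms unfolding cw_def by (auto simp: nth_append ud_nth)
qed

lemma ss_rep:
  assumes t: "t \<le> n" and j: "j < n"
  shows "ss (rep n t) j = cw n t ! j"
proof -
  define p where "p = t div 2"
  define k where "k = n - 2 * p"
  have kp: "2 * p \<le> n" using t unfolding p_def by presburger
  have kn: "k \<le> n" unfolding k_def by simp
  have Kk: "int n - 2 * int (t div 2) = int k" using kp unfolding k_def p_def by simp
  have rfj: "rf n t i = (if i \<le> int k then (if even t then i else - i) else (if even (i - int k) then i - 1 else i + 1))" for i
    unfolding rf_def Kk ..
  have cwj: "cw n t ! j = (if j < k then even t else even (j - k))" using cw_nth[OF j t] unfolding k_def p_def .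
  have b0: "rep n t (int j + 1) = rf n t (int j + 1)" by (rule rep_pos) (use j in auto)
  show ?thesis
  proof (cases "j < k")
    case True
    have a: "rep n t (int j) = (if even t then int j else - int j)"
    proof (cases "j = 0")
      case True then show ?thesis by (simp add: rep_def)
    next
      case False
      then have "rep n t (int j) = rf n t (int j)" using j by (intro rep_pos) auto
      then show ?thesis using rfj[of "int j"] \<open>j < k\<close> by simp
    qed
    have b: "rep n t (int j + 1) = (if even t then int j + 1 else - int j - 1)"
      using b0 rfj[of "int j + 1"] True by simp
    show ?thesis unfolding ss_def cwj using a b True by auto
  next
    case False
    define m where "m = j - k"
    have jm: "j = k + m" using False unfolding m_def by simp
    show ?thesis
    proof (cases "m = 0")
      case True
      have a: "rep n t (int j) \<le> int k"
      proof (cases "j = 0")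
        case True then show ?thesis by (simp add: rep_def)
      next
        case False
        then have "rep n t (int j) = rf n t (int j)" using j by (intro rep_pos) auto
        then show ?thesis using rfj[of "int j"] jm \<open>m = 0\<close> by auto
      qed
      have b: "rep n t (int j + 1) = int k + 2"
        using b0 rfj[of "int j + 1"] jm True by simp
      show ?thesis unfolding ss_def cwj using a b True False m_def by auto
    next
      case m0: False
      have a0: "rep n t (int j) = rf n t (int j)" using j jm m0 by (intro rep_pos) auto
      have e1: "int j - int k = int m" using jm by simp
      have e2: "int j + 1 - int k = int m + 1" using jm by simp
      have g1: "\<not> int j \<le> int k" using jm m0 by simp
      have g2: "\<not> int j + 1 \<le> int k" using jm m0 by simp
      have a: "rep n t (int j) = (if even m then int j - 1 else int j + 1)"
        using a0 rfj[of "int j"] g1 e1 by simp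
      have b: "rep n t (int j + 1) = (if even m then int j + 2 else int j)"
        using b0 rfj[of "int j + 1"] g2 e2 by simp
      show ?thesis unfolding ss_def cwj using a b False m_def by auto
    qed
  qed
qed

lemma word_rep:
  assumes t: "t \<le> n"
  shows "map (ss (rep n t)) [0..<n] = cw n t"
proof (rule nth_equalityI)
  show "length (map (ss (rep n t)) [0..<n]) = length (cw n t)"
    using t by (simp add: cw_def ud_def length_concat sum_list_replicate)
  fix j assume "j < length (map (ss (rep n t)) [0..<n])"
  then have j: "j < n" by simp
  then show "map (ss (rep n t)) [0..<n] ! j = cw n t ! j" using ss_rep[OF t j] by simp
qed

lemma idx_rep:
  assumes t: "t \<le> n" and n: "n \<ge> 1"
  shows "idx n (rep n t) = t"
proof -
  have s: "rep n t \<in> signed_perms n" by (rule rep_sp[OF t])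
  have "peB n (rep n t) = t div 2" using peB_pkl[OF s] word_rep[OF t] cw_props(4)[OF t n] by simp
  moreover have "(0 < rep n t 1) = even t" using word_props(3)[OF s n] word_rep[OF t] cw_props(3)[OF t n] by simp
  ultimately show ?thesis unfolding idx_def by auto
qed

lemma Ecl_rep: "t \<le> n \<Longrightarrow> n \<ge> 1 \<Longrightarrow> Ecl n s (rep n t) = (if s = t then 1 else 0)"
  unfolding Ecl_def using rep_sp[of t n] idx_rep[of t n] by auto

lemma Ecl_inj: "n \<ge> 1 \<Longrightarrow> inj_on (Ecl n) {..n}"
proof (rule inj_onI)
  fix s t assume n: "n \<ge> 1" and st: "s \<in> {..n}" "t \<in> {..n}" "Ecl n s = Ecl n t"
  have t1: "Ecl n t (rep n t) = 1" using Ecl_rep[of t n t] st n by simp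
  have "Ecl n s (rep n t) = 1" using t1 st(3) by simp
  then show "s = t" using Ecl_rep[of t n s] st n by (auto split: if_splits)
qed

lemma Ecl_indep:
  assumes n: "n \<ge> 1"
  shows "qv.independent (Ecl n ` {..n})"
  unfolding qv.dependent_finite[OF finite_imageI[OF finite_atMost]]
proof
  assume "\<exists>u. (\<exists>v\<in>Ecl n ` {..n}. u v \<noteq> 0) \<and> (\<Sum>v\<in>Ecl n ` {..n}. qscale (u v) v) = 0"
  then obtain c v where v: "v \<in> Ecl n ` {..n}" "c v \<noteq> 0" and sum0: "(\<Sum>v\<in>Ecl n ` {..n}. qscale (c v) v) = 0"
    by blast
  then obtain t where t: "t \<le> n" "v = Ecl n t" by auto
  have val: "w (rep n t) = (if w = Ecl n t then 1 else 0)" if w: "w \<in> Ecl n ` {..n}" for w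
  proof -
    obtain s where s: "s \<le> n" "w = Ecl n s" using w by auto
    have "(Ecl n s = Ecl n t) \<longleftrightarrow> s = t" using inj_onD[OF Ecl_inj[OF n], of s t] s t by auto
    then show ?thesis using Ecl_rep[OF t(1) n, of s] s by simp
  qed
  have "0 = (\<Sum>v\<in>Ecl n ` {..n}. qscale (c v) v) (rep n t)" using sum0 by simp
  also have "\<dots> = (\<Sum>w\<in>Ecl n ` {..n}. c w * w (rep n t))" by (simp add: sum_fun_app qscale_def)
  also have "\<dots> = (\<Sum>w\<in>Ecl n ` {..n}. if w = Ecl n t then c w else 0)"
    by (rule sum.cong) (auto simp: val)
  also have "\<dots> = c (Ecl n t)" using t by simp
  finally show False using t v by simp
qed

theorem corollary3p9:
  fixes n :: nat
  assumes "n \<ge> 1"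
  shows "(\<forall>a \<in> peak_algebra_B n. \<forall>b \<in> peak_algebra_B n.
            gmult n a b \<in> peak_algebra_B n \<and> gmult n a b = gmult n b a)
         \<and> qv.dim (peak_algebra_B n) = n + 1"
proof
  have S: "peak_algebra_B n = qv.span (RR n)" using gens_eq[OF assms] S_eq_R[OF assms] by simp
  show "\<forall>a \<in> peak_algebra_B n. \<forall>b \<in> peak_algebra_B n.
            gmult n a b \<in> peak_algebra_B n \<and> gmult n a b = gmult n b a"
    unfolding S using span_mult by blast
  have "qv.dim (peak_algebra_B n) = card (Ecl n ` {..n})"
    unfolding gens_eq[OF assms] by (rule qv.dim_span_eq_card_independent[OF Ecl_indep[OF assms]])
  also have "\<dots> = n + 1" using card_image[OF Ecl_inj[OF assms]] by simp
  finally show "qv.dim (peak_algebra_B n) = n + 1" .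
qed

end
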